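(* Let $(\Sigma,\Lambda,\rho,\tau)$ be a discrete real Riemann surface of genus $g$, and let $(a_1,\dots,a_g,b_1,\dots,b_g)$ be a symplectic basis of $H_1(\Sigma,\mathbb Z)$, represented by closed paths $\alpha_i,\beta_i$ on the medial graph $X$, such that $\tau(a_i)=a_i$ and $\tau(b_i)=\sum_{j}h_{ji}a_j-b_i$ for a symmetric matrix $H=(h_{ij})$ with entries in $\{0,1\}$. Let $\Pi^{B,B},\Pi^{W,B},\Pi^{B,W},\Pi^{W,W}$ be the blocks of the complete discrete period matrix with respect to this basis. (i) If $\tau$ is of Type 1 (color-preserving), then $2\Re(\Pi^{B,B})=H=2\Re(\Pi^{W,W})$ and $\Re(\Pi^{W,B})=0=\Re(\Pi^{B,W})$. (ii) If $\tau$ is of Type 2 (color-reversing), then $\Pi^{B,B}+\overline{\Pi^{W,W}}=H$ and $\Pi^{W,B}+\overline{\Pi^{B,W}}=0$.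
   Context: A discrete Riemann surface $(\Sigma,\Lambda,\rho)$ consists of a compact connected oriented surface $\Sigma$ of genus $g$, a finite strongly regular cellular decomposition $\Lambda$ of $\Sigma$ into quadrilaterals (two distinct faces are disjoint, share exactly one vertex, or share exactly one edge) whose 1-skeleton is bipartite with a fixed black/white vertex coloring, and $\rho:F(\Lambda)\to\{z\in\mathbb C:\Re z>0\}$. For a face $Q$ its vertices in counterclockwise order are $b_-,w_-,b_+,w_+$ ($b_\pm$ black, $w_\pm$ white). A discrete antiholomorphic involution is a bijection $\tau:V(\Lambda)\to V(\Lambda)$ with $\tau\circ\tau=\mathrm{id}$, a graph automorphism mapping faces to faces and reversing orientation (counterclockwise boundary order of $Q$ maps to clockwise boundary order of $\tau(Q)$), and either Type 1: $\tau$ preserves colors and $\rho_{\tau(Q)}=\overline{\rho_Q}$ for all $Q$, or Type 2: $\tau$ swaps colors and $\rho_{\tau(Q)}=1/\overline{\rho_Q}$ for all $Q$. Then $(\Sigma,\Lambda,\rho,\tau)$ is a discrete real Riemann surface. $\tau$ acts on $H_1(\Sigma,\mathbb Z)$; a symplectic basis satisfies $\mathrm{int}(a_i,a_j)=0=\mathrm{int}(b_i,b_j)$, $\mathrm{int}(a_i,b_j)=\delta_{ij}$. Medial graph $X$: vertices are midpoints of edges of $\Lambda$; two are adjacent iff the corresponding edges share a vertex and lie in a common face. Each face $Q$ contains four edges of $X$ forming a 4-cycle $F_Q$. The edge of $X$ joining the midpoints of edges $uv$ and $vw$ of $Q$ is black if $u,w$ are black and white if $u,w$ are white. $X$ is the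 1-skeleton of a cell decomposition of $\Sigma$ with faces $F_Q$ ($Q\in F(\Lambda)$) and $F_v$ ($v\in V(\Lambda)$, the cycle of $X$ around $v$). $\tau$ induces an automorphism of $X$. A discrete one-form is a function $\omega$ on oriented edges of $X$ with $\omega(-e)=-\omega(e)$; $\int_P\omega=\sum_{e\in P}\omega(e)$. It is of type $\Diamond$ if for every $Q$ it takes equal values on the two black edges of $F_Q$ both oriented from the $b_-$ side toward the $b_+$ side (midpoint of $b_-w_-$ to midpoint of $w_-b_+$, and midpoint of $b_-w_+$ to midpoint of $w_+b_+$), and equal values on the two white edges similarly oriented from $w_-$ toward $w_+$. It is closed if its sum around the boundary of every face $F_Q$, $F_v$ vanishes. For $f$ on the vertices of $Q$, $df(e)=(f(w)-f(u))/2$ for the edge $e$ from the midpoint of $uv$ to the midpoint of $vw$. $f$ is discrete holomorphic on $Q$ if $f(w_+)-f(w_-)=i\rho_Q(f(b_+)-f(b_-))$. A discrete holomorphic differential is a closed one-form of type $\Diamond$ such that for every $Q$ there is $f$ discrete holomorphic on $Q$ with $\omega=df$ on the edges of $F_Q$. For a closed path $P$ on $X$ let $BP$ (resp. $WP$) be its set of oriented black (resp. white) edges; for closed $\omega$ of type $\Diamond$, $2\int_{BP}\omega$ (black period) and $2\int_{WP}\omega$ (white period) depend only on the homology class of $P$. Known fact: for any $2g$ complex numbers there is a unique discrete holomorphic differential with these prescribed black and white $a$-periods $2\int_{B\alpha_k}\omega$, $2\int_{W\alpha_k}\omega$. Let $\omega^B_k$ be the one with black $a_j$-periods $\delta_{jk}$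 and zero white $a$-periods, and $\omega^W_k$ the one with white $a_j$-periods $\delta_{jk}$ and zero black $a$-periods. Then $\Pi^{B,B}_{jk}=2\int_{B\beta_j}\omega^B_k$, $\Pi^{W,B}_{jk}=2\int_{W\beta_j}\omega^B_k$, $\Pi^{B,W}_{jk}=2\int_{B\beta_j}\omega^W_k$, $\Pi^{W,W}_{jk}=2\int_{W\beta_j}\omega^W_k$; the complete discrete period matrix is $\tilde\Pi=\begin{pmatrix}\Pi^{B,W}&\Pi^{B,B}\\ \Pi^{W,W}&\Pi^{W,B}\end{pmatrix}$. *)

theory Defs
  imports Complex_Main
begin

section \<open>Combinatorial discrete Riemann surfaces (quad-graphs)\<close>

text \<open>A face is stored as its four vertices (b_-, w_-, b_+, w_+) in counterclockwise order.\<close>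
type_synonym 'v quad = "'v \<times> 'v \<times> 'v \<times> 'v"

definition bm :: "'v quad \<Rightarrow> 'v" where "bm q = fst q"
definition wm :: "'v quad \<Rightarrow> 'v" where "wm q = fst (snd q)"
definition bp :: "'v quad \<Rightarrow> 'v" where "bp q = fst (snd (snd q))"
definition wp :: "'v quad \<Rightarrow> 'v" where "wp q = snd (snd (snd q))"

definition cyc :: "'v quad \<Rightarrow> 'v list" where
  "cyc q = [bm q, wm q, bp q, wp q]"

definition qverts :: "'v quad \<Rightarrow> 'v set" where
  "qverts q = set (cyc q)"

definition triples :: "'v quad \<Rightarrow> ('v \<times> 'v \<times> 'v) set" where
  "triples q = {(bm q, wm q, bp q), (wm q, bp q, wp q), (bp q, wp q, bm q), (wp q, bm q, wm q)}"

definition dedges :: "'v quad \<Rightarrow> ('v \<times> 'v) set" where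
  "dedges q = {(bm q, wm q), (wm q, bp q), (bp q, wp q), (wp q, bm q)}"

definition quad_edges :: "'v quad \<Rightarrow> 'v set set" where
  "quad_edges q = {{bm q, wm q}, {wm q, bp q}, {bp q, wp q}, {wp q, bm q}}"

record ('v, 'f) drs =
  verts :: "'v set"
  blk :: "'v \<Rightarrow> bool"
  faces :: "'f set"
  quad :: "'f \<Rightarrow> 'v quad"
  rho :: "'f \<Rightarrow> complex"

definition lam_edges :: "('v, 'f) drs \<Rightarrow> 'v set set" where
  "lam_edges S = (\<Union>Q\<in>faces S. quad_edges (quad S Q))"

definition nbrs :: "('v, 'f) drs \<Rightarrow> 'v \<Rightarrow> 'v set" where
  "nbrs S v = {u. {u, v} \<in> lam_edges S}"

definition link_rel :: "('v, 'f) drs \<Rightarrow> 'v \<Rightarrow> ('v \<times> 'v) set" where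
  "link_rel S v = {(p, s). \<exists>Q\<in>faces S. (p, v, s) \<in> triples (quad S Q)}"

definition adj_rel :: "('v, 'f) drs \<Rightarrow> ('v \<times> 'v) set" where
  "adj_rel S = {(u, v). \<exists>Q\<in>faces S. (u, v) \<in> dedges (quad S Q)}"

text \<open>(S, g) is a discrete Riemann surface of genus g: the quadrilaterals glue to a compact
  connected oriented closed surface (each directed edge lies in exactly one face, each undirected
  edge in exactly two faces with opposite orientations, vertex links are single cycles),
  the decomposition is strongly regular, the 1-skeleton is bipartite with the given colouring,
  the Euler characteristic is 2 - 2g, and rho has positive real part.\<close>
definition discrete_riemann_surface :: "('v, 'f) drs \<Rightarrow> nat \<Rightarrow> bool" where
  "discrete_riemann_surface S g \<longleftrightarrow>
     finite (verts S) \<and> finite (faces S) \<and> faces S \<noteq> {} \<and>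
     verts S = (\<Union>Q\<in>faces S. qverts (quad S Q)) \<and>
     (\<forall>Q\<in>faces S. distinct (cyc (quad S Q)) \<and>
        blk S (bm (quad S Q)) \<and> blk S (bp (quad S Q)) \<and>
        \<not> blk S (wm (quad S Q)) \<and> \<not> blk S (wp (quad S Q))) \<and>
     (\<forall>u v. (u, v) \<in> adj_rel S \<longrightarrow>
        card {Q\<in>faces S. (u, v) \<in> dedges (quad S Q)} = 1 \<and>
        card {Q\<in>faces S. (v, u) \<in> dedges (quad S Q)} = 1) \<and>
     (\<forall>v\<in>verts S. \<forall>u\<in>nbrs S v. \<forall>w\<in>nbrs S v. (u, w) \<in> (link_rel S v)\<^sup>*) \<and>
     (\<forall>u\<in>verts S. \<forall>w\<in>verts S. (u, w) \<in> (adj_rel S)\<^sup>*) \<and>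
     (\<forall>Q\<in>faces S. \<forall>Q'\<in>faces S. Q \<noteq> Q' \<longrightarrow>
        (let I = qverts (quad S Q) \<inter> qverts (quad S Q') in
          I = {} \<or> card I = 1 \<or>
          (I \<in> quad_edges (quad S Q) \<and> I \<in> quad_edges (quad S Q')))) \<and>
     int (card (verts S)) - int (card (lam_edges S)) + int (card (faces S)) = 2 - 2 * int g \<and>
     (\<forall>Q\<in>faces S. Re (rho S Q) > 0)"

section \<open>Discrete antiholomorphic involutions\<close>

definition antihol_base :: "('v, 'f) drs \<Rightarrow> ('v \<Rightarrow> 'v) \<Rightarrow> bool" where
  "antihol_base S \<tau> \<longleftrightarrow>
     (\<forall>v\<in>verts S. \<tau> v \<in> verts S \<and> \<tau> (\<tau> v) = v) \<and>
     (\<forall>Q\<in>faces S. \<exists>Q'\<in>faces S. \<exists>n.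
        rotate n (cyc (quad S Q')) = rev (map \<tau> (cyc (quad S Q))))"

definition is_type1 :: "('v, 'f) drs \<Rightarrow> ('v \<Rightarrow> 'v) \<Rightarrow> bool" where
  "is_type1 S \<tau> \<longleftrightarrow>
     (\<forall>v\<in>verts S. blk S (\<tau> v) = blk S v) \<and>
     (\<forall>Q\<in>faces S. \<forall>Q'\<in>faces S. qverts (quad S Q') = \<tau> ` qverts (quad S Q) \<longrightarrow>
        rho S Q' = cnj (rho S Q))"

definition is_type2 :: "('v, 'f) drs \<Rightarrow> ('v \<Rightarrow> 'v) \<Rightarrow> bool" where
  "is_type2 S \<tau> \<longleftrightarrow>
     (\<forall>v\<in>verts S. blk S (\<tau> v) \<noteq> blk S v) \<and>
     (\<forall>Q\<in>faces S. \<forall>Q'\<in>faces S. qverts (quad S Q') = \<tau> ` qverts (quad S Q) \<longrightarrow>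
        rho S Q' = 1 / cnj (rho S Q))"

definition discrete_antihol_involution :: "('v, 'f) drs \<Rightarrow> ('v \<Rightarrow> 'v) \<Rightarrow> bool" where
  "discrete_antihol_involution S \<tau> \<longleftrightarrow> antihol_base S \<tau> \<and> (is_type1 S \<tau> \<or> is_type2 S \<tau>)"

section \<open>Medial graph X\<close>

text \<open>Vertices of X are the edges {u,v} of Lambda (standing for their midpoints);
  oriented edges of X are pairs (e1, e2).\<close>
definition Xedges :: "('v, 'f) drs \<Rightarrow> ('v set \<times> 'v set) set" where
  "Xedges S = {({u, v}, {v, w}) | u v w. \<exists>Q\<in>faces S.
      (u, v, w) \<in> triples (quad S Q) \<or> (w, v, u) \<in> triples (quad S Q)}"

definition black_Xe :: "('v, 'f) drs \<Rightarrow> 'v set \<times> 'v set \<Rightarrow> bool" where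
  "black_Xe S e \<longleftrightarrow> (\<forall>x \<in> (fst e - snd e) \<union> (snd e - fst e). blk S x)"

definition white_Xe :: "('v, 'f) drs \<Rightarrow> 'v set \<times> 'v set \<Rightarrow> bool" where
  "white_Xe S e \<longleftrightarrow> (\<forall>x \<in> (fst e - snd e) \<union> (snd e - fst e). \<not> blk S x)"

definition FQ_edges :: "'v quad \<Rightarrow> ('v set \<times> 'v set) set" where
  "FQ_edges q = {({u, v}, {v, w}) | u v w. (u, v, w) \<in> triples q}"

definition Fv_edges :: "('v, 'f) drs \<Rightarrow> 'v \<Rightarrow> ('v set \<times> 'v set) set" where
  "Fv_edges S v = {({p, v}, {v, s}) | p s. \<exists>Q\<in>faces S. (p, v, s) \<in> triples (quad S Q)}"

definition cycle_chain :: "('v set \<times> 'v set) set \<Rightarrow> 'v set \<times> 'v set \<Rightarrow> int" where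
  "cycle_chain C e = (if e \<in> C then 1 else if (snd e, fst e) \<in> C then -1 else 0)"

definition pedges :: "'a list \<Rightarrow> ('a \<times> 'a) list" where
  "pedges xs = zip xs (tl xs)"

definition closed_Xpath :: "('v, 'f) drs \<Rightarrow> 'v set list \<Rightarrow> bool" where
  "closed_Xpath S xs \<longleftrightarrow> length xs \<ge> 2 \<and> hd xs = last xs \<and> set (pedges xs) \<subseteq> Xedges S"

definition pchain :: "'v set list \<Rightarrow> 'v set \<times> 'v set \<Rightarrow> int" where
  "pchain xs e = int (count_list (pedges xs) e) - int (count_list (pedges xs) (snd e, fst e))"

text \<open>Homology in H_1(Sigma, Z), computed cellularly on the cell decomposition with
  1-skeleton X and faces F_Q, F_v.\<close>
definition homologous :: "('v, 'f) drs \<Rightarrow> ('v set \<times> 'v set \<Rightarrow> int) \<Rightarrow> ('v set \<times> 'v set \<Rightarrow> int) \<Rightarrow> bool" where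
  "homologous S c c' \<longleftrightarrow> (\<exists>cf cv. \<forall>e. c e - c' e =
      (\<Sum>Q\<in>faces S. cf Q * cycle_chain (FQ_edges (quad S Q)) e) +
      (\<Sum>v\<in>verts S. cv v * cycle_chain (Fv_edges S v) e))"

definition tau_path :: "('v \<Rightarrow> 'v) \<Rightarrow> 'v set list \<Rightarrow> 'v set list" where
  "tau_path \<tau> xs = map (\<lambda>e. \<tau> ` e) xs"

text \<open>The black edges of a path, read as diagonals b_- to b_+, give a
  homologous cycle on the black graph Gamma, the white ones (w_- to w_+) a homologous cycle on the
  dual white graph; the intersection number is the signed count of crossings of these
  diagonals (the crossing b_-b_+ with w_-w_+ inside a face counts +1).\<close>
definition Bcount :: "'v set list \<Rightarrow> 'v quad \<Rightarrow> int" where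
  "Bcount xs q = pchain xs ({bm q, wm q}, {wm q, bp q}) + pchain xs ({bm q, wp q}, {wp q, bp q})"

definition Wcount :: "'v set list \<Rightarrow> 'v quad \<Rightarrow> int" where
  "Wcount xs q = pchain xs ({wm q, bm q}, {bm q, wp q}) + pchain xs ({wm q, bp q}, {bp q, wp q})"

definition intersection :: "('v, 'f) drs \<Rightarrow> 'v set list \<Rightarrow> 'v set list \<Rightarrow> int" where
  "intersection S xs ys = (\<Sum>Q\<in>faces S. Bcount xs (quad S Q) * Wcount ys (quad S Q))"

definition symplectic_basis :: "('v, 'f) drs \<Rightarrow> nat \<Rightarrow> (nat \<Rightarrow> 'v set list) \<Rightarrow> (nat \<Rightarrow> 'v set list) \<Rightarrow> bool" where
  "symplectic_basis S g \<alpha> \<beta> \<longleftrightarrow>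
     (\<forall>i<g. closed_Xpath S (\<alpha> i) \<and> closed_Xpath S (\<beta> i)) \<and>
     (\<forall>i<g. \<forall>j<g. intersection S (\<alpha> i) (\<alpha> j) = 0 \<and> intersection S (\<beta> i) (\<beta> j) = 0 \<and>
        intersection S (\<alpha> i) (\<beta> j) = (if i = j then 1 else 0)) \<and>
     (\<forall>xs. closed_Xpath S xs \<longrightarrow> (\<exists>m n. homologous S (pchain xs)
        (\<lambda>e. \<Sum>i<g. m i * pchain (\<alpha> i) e + n i * pchain (\<beta> i) e)))"

section \<open>Discrete one-forms and holomorphic differentials\<close>

definition one_form :: "('v, 'f) drs \<Rightarrow> ('v set \<times> 'v set \<Rightarrow> complex) \<Rightarrow> bool" where
  "one_form S \<omega> \<longleftrightarrow> (\<forall>e. e \<notin> Xedges S \<longrightarrow> \<omega> e = 0) \<and>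
     (\<forall>e\<in>Xedges S. \<omega> (snd e, fst e) = - \<omega> e)"

definition type_diamond :: "('v, 'f) drs \<Rightarrow> ('v set \<times> 'v set \<Rightarrow> complex) \<Rightarrow> bool" where
  "type_diamond S \<omega> \<longleftrightarrow> (\<forall>Q\<in>faces S. let q = quad S Q in
     \<omega> ({bm q, wm q}, {wm q, bp q}) = \<omega> ({bm q, wp q}, {wp q, bp q}) \<and>
     \<omega> ({wm q, bm q}, {bm q, wp q}) = \<omega> ({wm q, bp q}, {bp q, wp q}))"

definition closed_form :: "('v, 'f) drs \<Rightarrow> ('v set \<times> 'v set \<Rightarrow> complex) \<Rightarrow> bool" where
  "closed_form S \<omega> \<longleftrightarrow>
     (\<forall>Q\<in>faces S. (\<Sum>e\<in>FQ_edges (quad S Q). \<omega> e) = 0) \<and>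
     (\<forall>v\<in>verts S. (\<Sum>e\<in>Fv_edges S v. \<omega> e) = 0)"

definition disc_holomorphic_on :: "complex \<Rightarrow> 'v quad \<Rightarrow> ('v \<Rightarrow> complex) \<Rightarrow> bool" where
  "disc_holomorphic_on r q f \<longleftrightarrow> f (wp q) - f (wm q) = \<i> * r * (f (bp q) - f (bm q))"

definition holo_diff :: "('v, 'f) drs \<Rightarrow> ('v set \<times> 'v set \<Rightarrow> complex) \<Rightarrow> bool" where
  "holo_diff S \<omega> \<longleftrightarrow> one_form S \<omega> \<and> type_diamond S \<omega> \<and> closed_form S \<omega> \<and>
     (\<forall>Q\<in>faces S. \<exists>f. disc_holomorphic_on (rho S Q) (quad S Q) f \<and>
        (\<forall>(u, v, w)\<in>triples (quad S Q). \<omega> ({u, v}, {v, w}) = (f w - f u) / 2))"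

definition bper :: "('v, 'f) drs \<Rightarrow> ('v set \<times> 'v set \<Rightarrow> complex) \<Rightarrow> 'v set list \<Rightarrow> complex" where
  "bper S \<omega> xs = 2 * sum_list (map \<omega> (filter (black_Xe S) (pedges xs)))"

definition wper :: "('v, 'f) drs \<Rightarrow> ('v set \<times> 'v set \<Rightarrow> complex) \<Rightarrow> 'v set list \<Rightarrow> complex" where
  "wper S \<omega> xs = 2 * sum_list (map \<omega> (filter (white_Xe S) (pedges xs)))"

definition omegaB :: "('v, 'f) drs \<Rightarrow> nat \<Rightarrow> (nat \<Rightarrow> 'v set list) \<Rightarrow> nat \<Rightarrow> ('v set \<times> 'v set \<Rightarrow> complex)" where
  "omegaB S g \<alpha> k = (THE \<omega>. holo_diff S \<omega> \<and>
     (\<forall>j<g. bper S \<omega> (\<alpha> j) = (if j = k then 1 else 0) \<and> wper S \<omega> (\<alpha> j) = 0))"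

definition omegaW :: "('v, 'f) drs \<Rightarrow> nat \<Rightarrow> (nat \<Rightarrow> 'v set list) \<Rightarrow> nat \<Rightarrow> ('v set \<times> 'v set \<Rightarrow> complex)" where
  "omegaW S g \<alpha> k = (THE \<omega>. holo_diff S \<omega> \<and>
     (\<forall>j<g. wper S \<omega> (\<alpha> j) = (if j = k then 1 else 0) \<and> bper S \<omega> (\<alpha> j) = 0))"

definition PiBB :: "('v, 'f) drs \<Rightarrow> nat \<Rightarrow> (nat \<Rightarrow> 'v set list) \<Rightarrow> (nat \<Rightarrow> 'v set list) \<Rightarrow> nat \<Rightarrow> nat \<Rightarrow> complex" where
  "PiBB S g \<alpha> \<beta> j k = bper S (omegaB S g \<alpha> k) (\<beta> j)"
definition PiWB :: "('v, 'f) drs \<Rightarrow> nat \<Rightarrow> (nat \<Rightarrow> 'v set list) \<Rightarrow> (nat \<Rightarrow> 'v set list) \<Rightarrow> nat \<Rightarrow> nat \<Rightarrow> complex" where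
  "PiWB S g \<alpha> \<beta> j k = wper S (omegaB S g \<alpha> k) (\<beta> j)"
definition PiBW :: "('v, 'f) drs \<Rightarrow> nat \<Rightarrow> (nat \<Rightarrow> 'v set list) \<Rightarrow> (nat \<Rightarrow> 'v set list) \<Rightarrow> nat \<Rightarrow> nat \<Rightarrow> complex" where
  "PiBW S g \<alpha> \<beta> j k = bper S (omegaW S g \<alpha> k) (\<beta> j)"
definition PiWW :: "('v, 'f) drs \<Rightarrow> nat \<Rightarrow> (nat \<Rightarrow> 'v set list) \<Rightarrow> (nat \<Rightarrow> 'v set list) \<Rightarrow> nat \<Rightarrow> nat \<Rightarrow> complex" where
  "PiWW S g \<alpha> \<beta> j k = wper S (omegaW S g \<alpha> k) (\<beta> j)"

end

theory Submission
  imports Defs "Jordan_Normal_Form.Determinant"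
begin


lemma square_surj:
  fixes K :: "nat \<Rightarrow> 'f \<Rightarrow> complex"
  assumes fe: "bij_betw fe {..<n} F"
    and inj: "\<And>\<beta>. \<forall>r<n. (\<Sum>Q\<in>F. K r Q * \<beta> Q) = 0 \<Longrightarrow> \<forall>Q\<in>F. \<beta> Q = 0"
  shows "\<exists>\<beta>. \<forall>r<n. (\<Sum>Q\<in>F. K r Q * \<beta> Q) = t r"
proof -
  define A where "A = mat n n (\<lambda>(r,c). K r (fe c))"
  have A: "A \<in> carrier_mat n n" by (simp add: A_def)
  define ie where "ie = the_inv_into {..<n} fe"
  have ie: "ie (fe c) = c" if "c < n" for c
    using fe that unfolding ie_def bij_betw_def by (simp add: the_inv_into_f_f)
  have reidx: "(\<Sum>Q\<in>F. K r Q * x $ (ie Q)) = (A *\<^sub>v x) $ r" if "r < n" "x \<in> carrier_vec n" for r x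
  proof -
    have "(\<Sum>Q\<in>F. K r Q * x $ (ie Q)) = (\<Sum>c\<in>{..<n}. K r (fe c) * x $ (ie (fe c)))"
      using sum.reindex[of fe "{..<n}" "\<lambda>Q. K r Q * x $ (ie Q)"] fe unfolding bij_betw_def by simp
    also have "\<dots> = (\<Sum>c\<in>{0..<n}. K r (fe c) * x $ c)" using ie by (simp add: lessThan_atLeast0)
    also have "\<dots> = (A *\<^sub>v x) $ r"
      using that unfolding A_def by (simp add: mult_mat_vec_def scalar_prod_def)
    finally show ?thesis .
  qed
  have det: "det A \<noteq> 0"
  proof
    assume "det A = 0"
    then obtain v where v: "v \<in> carrier_vec n" "v \<noteq> 0\<^sub>v n" "A *\<^sub>v v = 0\<^sub>v n"
      using det_0_iff_vec_prod_zero_field[OF A] by blast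
    have "\<forall>r<n. (\<Sum>Q\<in>F. K r Q * v $ (ie Q)) = 0" using reidx v by simp
    then have z: "\<forall>Q\<in>F. v $ (ie Q) = 0" by (rule inj)
    have "v = 0\<^sub>v n"
    proof (rule eq_vecI)
      fix c assume c: "c < dim_vec (0\<^sub>v n)"
      then have "c < n" by simp
      then have "fe c \<in> F" using fe unfolding bij_betw_def by auto
      then show "v $ c = 0\<^sub>v n $ c" using z ie \<open>c < n\<close> by fastforce
    qed (use v in simp)
    with v show False by simp
  qed
  from det_non_zero_imp_unit[OF A det, of "()"]
  obtain B where B: "B \<in> carrier_mat n n" "A * B = 1\<^sub>m n"
    unfolding Units_def ring_mat_def by auto
  define x where "x = B *\<^sub>v vec n t"
  have x: "x \<in> carrier_vec n" using B by (simp add: x_def)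
  have "A *\<^sub>v x = vec n t"
    unfolding x_def using A B by (simp add: assoc_mult_mat_vec[symmetric])
  then show ?thesis using reidx[OF _ x] by (intro exI[of _ "\<lambda>Q. x $ ie Q"]) auto
qed



definition xe :: "'v \<times> 'v \<times> 'v \<Rightarrow> 'v set \<times> 'v set" where
  "xe t = ({fst t, fst (snd t)}, {fst (snd t), snd (snd t)})"
definition rv :: "'a \<times> 'a \<Rightarrow> 'a \<times> 'a" where "rv e = (snd e, fst e)"
definition T1 :: "'v quad \<Rightarrow> 'v \<times> 'v \<times> 'v" where "T1 q = (bm q, wm q, bp q)"
definition T2 :: "'v quad \<Rightarrow> 'v \<times> 'v \<times> 'v" where "T2 q = (wm q, bp q, wp q)"
definition T3 :: "'v quad \<Rightarrow> 'v \<times> 'v \<times> 'v" where "T3 q = (bp q, wp q, bm q)"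
definition T4 :: "'v quad \<Rightarrow> 'v \<times> 'v \<times> 'v" where "T4 q = (wp q, bm q, wm q)"

lemma triples_eq: "triples q = {T1 q, T2 q, T3 q, T4 q}"
  by (simp add: triples_def T1_def T2_def T3_def T4_def)

lemma rv_rv[simp]: "rv (rv e) = e" by (simp add: rv_def)
lemma rv_xe: "rv (xe (u,v,w)) = xe (w,v,u)" by (auto simp: rv_def xe_def)

lemma xe_eq_iff:
  assumes "u \<noteq> v" "v \<noteq> w" "u \<noteq> w" "u' \<noteq> v'" "v' \<noteq> w'" "u' \<noteq> w'"
  shows "xe (u,v,w) = xe (u',v',w') \<longleftrightarrow> (u,v,w) = (u',v',w')"
  using assms by (auto simp: xe_def doubleton_eq_iff)

locale DR =
  fixes S :: "('v, 'f) drs" and g :: nat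
  assumes drs: "discrete_riemann_surface S g"
begin

lemma fin_verts: "finite (verts S)" using drs unfolding discrete_riemann_surface_def by blast
lemma fin_faces: "finite (faces S)" using drs unfolding discrete_riemann_surface_def by blast
lemma faces_ne: "faces S \<noteq> {}" using drs unfolding discrete_riemann_surface_def by blast
lemma verts_eq: "verts S = (\<Union>Q\<in>faces S. qverts (quad S Q))"
  using drs unfolding discrete_riemann_surface_def by blast
lemma rho_pos: "Q \<in> faces S \<Longrightarrow> Re (rho S Q) > 0"
  using drs unfolding discrete_riemann_surface_def by blast

lemma face_props:
  assumes "Q \<in> faces S"
  shows "distinct (cyc (quad S Q))" "blk S (bm (quad S Q))" "blk S (bp (quad S Q))"
    "\<not> blk S (wm (quad S Q))" "\<not> blk S (wp (quad S Q))"
  using drs assms by (auto simp: discrete_riemann_surface_def)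

lemma face_dist:
  assumes "Q \<in> faces S"
  shows "bm (quad S Q) \<noteq> wm (quad S Q)" "bm (quad S Q) \<noteq> bp (quad S Q)" "bm (quad S Q) \<noteq> wp (quad S Q)"
    "wm (quad S Q) \<noteq> bp (quad S Q)" "wm (quad S Q) \<noteq> wp (quad S Q)" "bp (quad S Q) \<noteq> wp (quad S Q)"
  using face_props(1)[OF assms] by (auto simp: cyc_def)

lemma face_verts:
  assumes "Q \<in> faces S"
  shows "bm (quad S Q) \<in> verts S" "wm (quad S Q) \<in> verts S" "bp (quad S Q) \<in> verts S" "wp (quad S Q) \<in> verts S"
  using assms verts_eq by (auto simp: qverts_def cyc_def)

lemma dedge_unique:
  assumes Q: "Q \<in> faces S" and Q': "Q' \<in> faces S"
    and e: "(u,v) \<in> dedges (quad S Q)" and e': "(u,v) \<in> dedges (quad S Q')"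
  shows "Q = Q'"
proof -
  have "(u,v) \<in> adj_rel S" using Q e by (auto simp: adj_rel_def)
  then have "card {Q\<in>faces S. (u, v) \<in> dedges (quad S Q)} = 1"
    using drs by (auto simp: discrete_riemann_surface_def)
  then obtain x where x: "{Q\<in>faces S. (u, v) \<in> dedges (quad S Q)} = {x}" by (auto simp: card_1_singleton_iff)
  have "Q \<in> {Q\<in>faces S. (u, v) \<in> dedges (quad S Q)}" "Q' \<in> {Q\<in>faces S. (u, v) \<in> dedges (quad S Q)}"
    using Q Q' e e' by auto
  then show ?thesis unfolding x by simp
qed

lemma sreg3:
  assumes Q: "Q \<in> faces S" and Q': "Q' \<in> faces S" and ne: "Q \<noteq> Q'"
    and sub: "{u,v,w} \<subseteq> qverts (quad S Q)" "{u,v,w} \<subseteq> qverts (quad S Q')"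
    and d: "u \<noteq> v" "v \<noteq> w" "u \<noteq> w"
  shows False
proof -
  define I where "I = qverts (quad S Q) \<inter> qverts (quad S Q')"
  have I: "I = {} \<or> card I = 1 \<or> (I \<in> quad_edges (quad S Q) \<and> I \<in> quad_edges (quad S Q'))"
    using drs Q Q' ne unfolding discrete_riemann_surface_def I_def Let_def by blast
  have fin: "finite I" by (simp add: I_def qverts_def)
  have "{u,v,w} \<subseteq> I" using sub by (auto simp: I_def)
  then have "card {u,v,w} \<le> card I" using fin by (rule card_mono[rotated])
  then have c3: "3 \<le> card I" using d by simp
  have c2: "card x \<le> 2" if "x \<in> quad_edges q" for x :: "'v set" and q
    using that by (auto simp: quad_edges_def card_insert_if)
  show False
  proof (cases "I = {}")
    case True then show False using c3 by simp
  next
    case False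
    then have "card I = 1 \<or> I \<in> quad_edges (quad S Q)" using I by blast
    then show False using c3 c2[of I "quad S Q"] by linarith
  qed
qed

lemma triple_dedge:
  "(u,v,w) \<in> triples q \<Longrightarrow> (u,v) \<in> dedges q \<and> (v,w) \<in> dedges q"
  by (auto simp: triples_def dedges_def)

lemma triple_qverts:
  "(u,v,w) \<in> triples q \<Longrightarrow> {u,v,w} \<subseteq> qverts q"
  by (auto simp: triples_def qverts_def cyc_def)

lemma triple_dist:
  assumes "Q \<in> faces S" "(u,v,w) \<in> triples (quad S Q)"
  shows "u \<noteq> v" "v \<noteq> w" "u \<noteq> w"
  using assms face_dist[OF assms(1)] by (auto simp: triples_def)

lemma triple_mid_unique:
  assumes "Q \<in> faces S" "(u,v,w) \<in> triples (quad S Q)" "(u',v,w') \<in> triples (quad S Q)"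
  shows "u = u' \<and> w = w'"
  using assms face_dist[OF assms(1)] by (auto simp: triples_def)

lemma xe_inj:
  assumes Q: "Q \<in> faces S" and Q': "Q' \<in> faces S"
    and t: "t \<in> triples (quad S Q)" and t': "t' \<in> triples (quad S Q')"
    and eq: "xe t = xe t'"
  shows "Q = Q' \<and> t = t'"
proof -
  obtain u v w where tt: "t = (u,v,w)" by (cases t) auto
  obtain u' v' w' where tt': "t' = (u',v',w')" by (cases t') auto
  have t1: "(u,v,w) \<in> triples (quad S Q)" using t tt by simp
  have t2: "(u',v',w') \<in> triples (quad S Q')" using t' tt' by simp
  have "t = t'" using eq xe_eq_iff[OF triple_dist[OF Q t1] triple_dist[OF Q' t2]]
    tt tt' by simp
  moreover have "Q = Q'" using dedge_unique[OF Q Q'] triple_dedge t t' tt calculation by metis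
  ultimately show ?thesis by simp
qed

lemma xe_rv_ne:
  assumes Q: "Q \<in> faces S" and Q': "Q' \<in> faces S"
    and t: "t \<in> triples (quad S Q)" and t': "t' \<in> triples (quad S Q')"
  shows "xe t \<noteq> rv (xe t')"
proof
  assume eq: "xe t = rv (xe t')"
  obtain u v w where tt: "t = (u,v,w)" by (cases t) auto
  obtain u' v' w' where tt': "t' = (u',v',w')" by (cases t') auto
  have d: "u \<noteq> v" "v \<noteq> w" "u \<noteq> w" using triple_dist[OF Q] t tt by auto
  have t2: "(u',v',w') \<in> triples (quad S Q')" using t' tt' by simp
  have d': "w' \<noteq> v'" "v' \<noteq> u'" "w' \<noteq> u'" using triple_dist[OF Q' t2] by auto
  have "(u,v,w) = (w',v',u')" using eq tt tt' rv_xe xe_eq_iff[OF d d'] by metis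
  then have t'': "(w,v,u) \<in> triples (quad S Q')" using t' tt' by simp
  show False
  proof (cases "Q = Q'")
    case True
    then show False using triple_mid_unique[OF Q] t tt t'' d by auto
  next
    case False
    have "{u,v,w} \<subseteq> qverts (quad S Q)" using triple_qverts t tt by metis
    moreover have "{w,v,u} \<subseteq> qverts (quad S Q')" using triple_qverts t'' by metis
    ultimately show False using sreg3[OF Q Q' False _ _ d] by (simp add: insert_commute)
  qed
qed

lemma Xedges_iff:
  "e \<in> Xedges S \<longleftrightarrow> (\<exists>Q\<in>faces S. \<exists>t\<in>triples (quad S Q). e = xe t \<or> e = rv (xe t))"
proof
  assume "e \<in> Xedges S"
  then obtain u v w Q where e: "e = ({u,v},{v,w})" and Q: "Q \<in> faces S"
    and tr: "(u, v, w) \<in> triples (quad S Q) \<or> (w, v, u) \<in> triples (quad S Q)"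
    unfolding Xedges_def by blast
  have "e = xe (u,v,w)" "e = rv (xe (w,v,u))" using e by (auto simp: xe_def rv_def)
  then show "\<exists>Q\<in>faces S. \<exists>t\<in>triples (quad S Q). e = xe t \<or> e = rv (xe t)" using Q tr by blast
next
  assume "\<exists>Q\<in>faces S. \<exists>t\<in>triples (quad S Q). e = xe t \<or> e = rv (xe t)"
  then obtain Q t where Q: "Q \<in> faces S" and t0: "t \<in> triples (quad S Q)"
    and e0: "e = xe t \<or> e = rv (xe t)" by blast
  obtain u v w where tt: "t = (u,v,w)" by (cases t) auto
  have t: "(u,v,w) \<in> triples (quad S Q)" and e: "e = xe (u,v,w) \<or> e = rv (xe (u,v,w))"
    using t0 e0 tt by auto
  show "e \<in> Xedges S"
  proof (cases "e = xe (u,v,w)")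
    case True
    then show ?thesis unfolding Xedges_def xe_def using Q t by auto
  next
    case False
    then have "e = ({w,v},{v,u})" using e by (auto simp: xe_def rv_def insert_commute)
    then show ?thesis unfolding Xedges_def using Q t by blast
  qed
qed

lemma finite_Xedges: "finite (Xedges S)"
proof -
  have "Xedges S \<subseteq> (\<Union>Q\<in>faces S. \<Union>t\<in>triples (quad S Q). {xe t, rv (xe t)})"
    using Xedges_iff by blast
  moreover have "finite (\<Union>Q\<in>faces S. \<Union>t\<in>triples (quad S Q). {xe t, rv (xe t)})"
    using fin_faces by (auto simp: triples_def)
  ultimately show ?thesis by (rule finite_subset)
qed

end


definition ind :: "'a \<times> 'a \<Rightarrow> 'a \<times> 'a \<Rightarrow> complex" where
  "ind e x = (if e = x then 1 else 0) - (if e = rv x then 1 else 0)"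

definition omF :: "('v,'f) drs \<Rightarrow> ('f \<Rightarrow> complex) \<Rightarrow> ('f \<Rightarrow> complex) \<Rightarrow> 'v set \<times> 'v set \<Rightarrow> complex" where
  "omF S \<theta> \<kappa> e = (\<Sum>Q\<in>faces S. \<theta> Q * (ind e (xe (T1 (quad S Q))) - ind e (xe (T3 (quad S Q))))
      + \<kappa> Q * (ind e (xe (T2 (quad S Q))) - ind e (xe (T4 (quad S Q)))))"

definition PF :: "('v,'f) drs \<Rightarrow> ('f \<Rightarrow> complex) \<Rightarrow> ('f \<Rightarrow> complex) \<Rightarrow> ('v set \<times> 'v set \<Rightarrow> int) \<Rightarrow> complex" where
  "PF S \<theta> \<kappa> d = (\<Sum>Q\<in>faces S. \<theta> Q * of_int (d (xe (T1 (quad S Q))) - d (xe (T3 (quad S Q))))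
      + \<kappa> Q * of_int (d (xe (T2 (quad S Q))) - d (xe (T4 (quad S Q)))))"

definition LV :: "('v,'f) drs \<Rightarrow> ('f \<Rightarrow> complex) \<Rightarrow> ('f \<Rightarrow> complex) \<Rightarrow> 'v \<Rightarrow> complex" where
  "LV S \<theta> \<kappa> v = (\<Sum>Q\<in>faces S. (if wm (quad S Q) = v then \<theta> Q else 0) + (if bp (quad S Q) = v then \<kappa> Q else 0)
      - (if wp (quad S Q) = v then \<theta> Q else 0) - (if bm (quad S Q) = v then \<kappa> Q else 0))"

definition val :: "'v quad \<Rightarrow> complex \<Rightarrow> complex \<Rightarrow> 'v \<times> 'v \<times> 'v \<Rightarrow> complex" where
  "val q a b t = (if t = T1 q then a else if t = T2 q then b else if t = T3 q then - a else if t = T4 q then - b else 0)"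

lemma rv_eq_iff: "rv e = x \<longleftrightarrow> e = rv x"
  by (cases e; cases x) (auto simp: rv_def)

lemma ind_rv: "ind (rv e) x = - ind e x"
  unfolding ind_def rv_eq_iff by (cases "e = x"; cases "e = rv x") auto

lemma omF_rv: "omF S \<theta> \<kappa> (rv e) = - omF S \<theta> \<kappa> e"
  unfolding omF_def ind_rv sum_negf[symmetric] by (rule sum.cong) (auto simp: algebra_simps)

context DR begin

lemma T_in:
  "T1 q \<in> triples q" "T2 q \<in> triples q" "T3 q \<in> triples q" "T4 q \<in> triples q"
  by (auto simp: triples_eq)

lemma T_dist:
  assumes "Q \<in> faces S"
  shows "T1 (quad S Q) \<noteq> T2 (quad S Q)" "T1 (quad S Q) \<noteq> T3 (quad S Q)" "T1 (quad S Q) \<noteq> T4 (quad S Q)"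
   "T2 (quad S Q) \<noteq> T3 (quad S Q)" "T2 (quad S Q) \<noteq> T4 (quad S Q)" "T3 (quad S Q) \<noteq> T4 (quad S Q)"
  using face_dist[OF assms] by (auto simp: T1_def T2_def T3_def T4_def)

lemma ind_xe:
  assumes Q0: "Q0 \<in> faces S" and Q: "Q \<in> faces S"
    and t0: "t0 \<in> triples (quad S Q0)" and t: "t \<in> triples (quad S Q)"
  shows "ind (xe t0) (xe t) = (if Q = Q0 \<and> t = t0 then 1 else 0)"
  using xe_inj[OF Q0 Q t0 t] xe_rv_ne[OF Q0 Q t0 t] unfolding ind_def by auto

lemma omF_xe:
  assumes Q0: "Q0 \<in> faces S" and t0: "t0 \<in> triples (quad S Q0)"
  shows "omF S \<theta> \<kappa> (xe t0) = val (quad S Q0) (\<theta> Q0) (\<kappa> Q0) t0"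
proof -
  have "omF S \<theta> \<kappa> (xe t0) = (\<Sum>Q\<in>faces S. if Q = Q0 then
      \<theta> Q * ((if t0 = T1 (quad S Q) then 1 else 0) - (if t0 = T3 (quad S Q) then 1 else 0))
    + \<kappa> Q * ((if t0 = T2 (quad S Q) then 1 else 0) - (if t0 = T4 (quad S Q) then 1 else 0)) else 0)"
    unfolding omF_def
    apply (rule sum.cong[OF refl])
    apply (subst ind_xe[OF Q0 _ t0 T_in(1)], assumption)
    apply (subst ind_xe[OF Q0 _ t0 T_in(2)], assumption)
    apply (subst ind_xe[OF Q0 _ t0 T_in(3)], assumption)
    apply (subst ind_xe[OF Q0 _ t0 T_in(4)], assumption)
    by auto
  also have "\<dots> = \<theta> Q0 * ((if t0 = T1 (quad S Q0) then 1 else 0) - (if t0 = T3 (quad S Q0) then 1 else 0))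
    + \<kappa> Q0 * ((if t0 = T2 (quad S Q0) then 1 else 0) - (if t0 = T4 (quad S Q0) then 1 else 0))"
    using Q0 fin_faces by (simp add: sum.delta)
  also have "\<dots> = val (quad S Q0) (\<theta> Q0) (\<kappa> Q0) t0"
    using t0 T_dist[OF Q0] unfolding val_def triples_eq by auto
  finally show ?thesis .
qed

lemma omF_T:
  assumes Q: "Q \<in> faces S"
  shows "omF S \<theta> \<kappa> (xe (T1 (quad S Q))) = \<theta> Q" "omF S \<theta> \<kappa> (xe (T2 (quad S Q))) = \<kappa> Q"
    "omF S \<theta> \<kappa> (xe (T3 (quad S Q))) = - \<theta> Q" "omF S \<theta> \<kappa> (xe (T4 (quad S Q))) = - \<kappa> Q"
  using omF_xe[OF Q T_in(1)] omF_xe[OF Q T_in(2)] omF_xe[OF Q T_in(3)] omF_xe[OF Q T_in(4)] T_dist[OF Q]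
  by (auto simp: val_def)

lemma xe_in_Xedges:
  assumes "Q \<in> faces S" "t \<in> triples (quad S Q)"
  shows "xe t \<in> Xedges S" "rv (xe t) \<in> Xedges S"
  using assms Xedges_iff by blast+

lemma omF_one_form: "one_form S (omF S \<theta> \<kappa>)"
proof -
  have "omF S \<theta> \<kappa> e = 0" if "e \<notin> Xedges S" for e
  proof -
    have z: "ind e (xe t) = 0" if "Q \<in> faces S" "t \<in> triples (quad S Q)" for Q t
      using xe_in_Xedges[OF that] \<open>e \<notin> Xedges S\<close> unfolding ind_def by auto
    show ?thesis unfolding omF_def
      apply (rule sum.neutral, rule ballI)
      apply (subst z[OF _ T_in(1)], assumption)
      apply (subst z[OF _ T_in(2)], assumption)
      apply (subst z[OF _ T_in(3)], assumption)
      apply (subst z[OF _ T_in(4)], assumption)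
      by simp
  qed
  moreover have "omF S \<theta> \<kappa> (snd e, fst e) = - omF S \<theta> \<kappa> e" for e
    using omF_rv[of S \<theta> \<kappa> e] by (simp add: rv_def)
  ultimately show ?thesis unfolding one_form_def by blast
qed

lemma FQ_edges_eq: "FQ_edges q = xe ` triples q"
  unfolding FQ_edges_def xe_def by force

lemma Fv_edges_eq: "Fv_edges S v = (\<lambda>(Q,t). xe t) ` (SIGMA Q:faces S. {t\<in>triples (quad S Q). fst (snd t) = v})"
  unfolding Fv_edges_def xe_def by force

lemma sum_Fv:
  "(\<Sum>e\<in>Fv_edges S v. f e) = (\<Sum>Q\<in>faces S. \<Sum>t\<in>{t\<in>triples (quad S Q). fst (snd t) = v}. f (xe t))"
proof -
  have inj: "inj_on (\<lambda>(Q,t). xe t) (SIGMA Q:faces S. {t\<in>triples (quad S Q). fst (snd t) = v})"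
    by (auto simp: inj_on_def dest: xe_inj)
  have fin: "finite (SIGMA Q:faces S. {t\<in>triples (quad S Q). fst (snd t) = v})"
    using fin_faces by (auto simp: triples_def)
  have "(\<Sum>e\<in>Fv_edges S v. f e) = (\<Sum>(Q,t)\<in>(SIGMA Q:faces S. {t\<in>triples (quad S Q). fst (snd t) = v}). f (xe t))"
    unfolding Fv_edges_eq by (subst sum.reindex[OF inj]) (simp add: comp_def split_def)
  also have "\<dots> = (\<Sum>Q\<in>faces S. \<Sum>t\<in>{t\<in>triples (quad S Q). fst (snd t) = v}. f (xe t))"
    by (rule sum.Sigma[symmetric]) (use fin_faces in \<open>auto simp: triples_def\<close>)
  finally show ?thesis .
qed

lemma sum_T:
  assumes Q: "Q \<in> faces S"
  shows "(\<Sum>t\<in>{t\<in>triples (quad S Q). P t}. f t) =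
     (if P (T1 (quad S Q)) then f (T1 (quad S Q)) else 0) + (if P (T2 (quad S Q)) then f (T2 (quad S Q)) else 0)
   + (if P (T3 (quad S Q)) then f (T3 (quad S Q)) else 0) + (if P (T4 (quad S Q)) then f (T4 (quad S Q)) else 0)" (is "_ = ?R")
proof -
  have "(\<Sum>t\<in>{t\<in>triples (quad S Q). P t}. f t) = (\<Sum>t\<in>triples (quad S Q). if P t then f t else 0)"
    by (rule sum.inter_filter) (simp add: triples_def)
  also have "\<dots> = ?R" unfolding triples_eq using T_dist[OF Q] by (simp add: add.assoc)
  finally show ?thesis .
qed

lemma sum_omF_Fv: "(\<Sum>e\<in>Fv_edges S v. omF S \<theta> \<kappa> e) = LV S \<theta> \<kappa> v"
  unfolding sum_Fv LV_def
  apply (rule sum.cong[OF refl])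
  apply (subst sum_T, assumption)
  apply (simp add: omF_T)
  by (simp add: T1_def T2_def T3_def T4_def)

lemma sum_omF_FQ:
  assumes Q: "Q \<in> faces S"
  shows "(\<Sum>e\<in>FQ_edges (quad S Q). omF S \<theta> \<kappa> e) = 0"
proof -
  have inj: "inj_on xe (triples (quad S Q))" by (auto simp: inj_on_def dest: xe_inj[OF Q Q])
  have "(\<Sum>e\<in>FQ_edges (quad S Q). omF S \<theta> \<kappa> e) = (\<Sum>t\<in>triples (quad S Q). omF S \<theta> \<kappa> (xe t))"
    unfolding FQ_edges_eq by (simp add: sum.reindex[OF inj])
  also have "\<dots> = 0" unfolding triples_eq using T_dist[OF Q] by (simp add: omF_T[OF Q])
  finally show ?thesis .
qed

lemma omF_holo:
  assumes L: "\<forall>v\<in>verts S. LV S \<theta> (\<lambda>Q. \<i> * rho S Q * \<theta> Q) v = 0"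
  shows "holo_diff S (omF S \<theta> (\<lambda>Q. \<i> * rho S Q * \<theta> Q))"
proof -
  let ?\<omega> = "omF S \<theta> (\<lambda>Q. \<i> * rho S Q * \<theta> Q)"
  have td: "type_diamond S ?\<omega>"
    unfolding type_diamond_def Let_def
  proof
    fix Q assume Q: "Q \<in> faces S"
    have a: "({bm (quad S Q), wp (quad S Q)}, {wp (quad S Q), bp (quad S Q)}) = rv (xe (T3 (quad S Q)))"
      by (auto simp: rv_def xe_def T3_def)
    have b: "({wm (quad S Q), bm (quad S Q)}, {bm (quad S Q), wp (quad S Q)}) = rv (xe (T4 (quad S Q)))"
      by (auto simp: rv_def xe_def T4_def)
    have c: "({bm (quad S Q), wm (quad S Q)}, {wm (quad S Q), bp (quad S Q)}) = xe (T1 (quad S Q))"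
      by (auto simp: xe_def T1_def)
    have d: "({wm (quad S Q), bp (quad S Q)}, {bp (quad S Q), wp (quad S Q)}) = xe (T2 (quad S Q))"
      by (auto simp: xe_def T2_def)
    show "?\<omega> ({bm (quad S Q), wm (quad S Q)}, {wm (quad S Q), bp (quad S Q)}) =
          ?\<omega> ({bm (quad S Q), wp (quad S Q)}, {wp (quad S Q), bp (quad S Q)}) \<and>
          ?\<omega> ({wm (quad S Q), bm (quad S Q)}, {bm (quad S Q), wp (quad S Q)}) =
          ?\<omega> ({wm (quad S Q), bp (quad S Q)}, {bp (quad S Q), wp (quad S Q)})"
      unfolding a b c d omF_rv omF_T[OF Q] by simp
  qed
  have cl: "closed_form S ?\<omega>"
    unfolding closed_form_def using sum_omF_FQ sum_omF_Fv L by auto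
  have hol: "\<exists>f. disc_holomorphic_on (rho S Q) (quad S Q) f \<and>
        (\<forall>(u, v, w)\<in>triples (quad S Q). ?\<omega> ({u, v}, {v, w}) = (f w - f u) / 2)" if Q: "Q \<in> faces S" for Q
  proof -
    define f where "f x = (if x = bp (quad S Q) then 2 * \<theta> Q else if x = wp (quad S Q) then 2 * (\<i> * rho S Q * \<theta> Q) else 0)" for x
    note fd = face_dist[OF Q]
    have "disc_holomorphic_on (rho S Q) (quad S Q) f"
      unfolding disc_holomorphic_on_def f_def using fd by auto
    moreover have "?\<omega> ({u, v}, {v, w}) = (f w - f u) / 2" if "(u,v,w) \<in> triples (quad S Q)" for u v w
    proof -
      have "?\<omega> ({u, v}, {v, w}) = ?\<omega> (xe (u,v,w))" by (simp add: xe_def)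
      also have "\<dots> = val (quad S Q) (\<theta> Q) (\<i> * rho S Q * \<theta> Q) (u,v,w)" by (rule omF_xe[OF Q that])
      also have "\<dots> = (f w - f u) / 2"
        using that fd unfolding triples_eq val_def f_def T1_def T2_def T3_def T4_def by auto
      finally show ?thesis .
    qed
    ultimately show ?thesis by blast
  qed
  show ?thesis unfolding holo_diff_def using omF_one_form td cl hol by blast
qed

end


definition cnt :: "('a \<times> 'a) list \<Rightarrow> 'a \<times> 'a \<Rightarrow> complex" where
  "cnt L x = of_nat (count_list L x) - of_nat (count_list L (rv x))"

lemma sum_list_sum_swap: "sum_list (map (\<lambda>e. \<Sum>Q\<in>A. F Q e) L) = (\<Sum>Q\<in>A. sum_list (map (F Q) L))"
  by (induction L) (auto simp: sum.distrib)

lemma sum_list_ind: "sum_list (map (\<lambda>e. ind e x) L) = cnt L x"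
  by (induction L) (simp_all add: ind_def cnt_def)

lemma sum_list_ind4:
  "sum_list (map (\<lambda>e. a * (ind e x1 - ind e x2) + b * (ind e x3 - ind e x4)) L) =
   a * (cnt L x1 - cnt L x2) + b * (cnt L x3 - cnt L x4)"
  by (simp add: sum_list_addf sum_list_subtractf sum_list_const_mult sum_list_ind)

lemma cnt_filter:
  assumes "P (rv x) = P x"
  shows "cnt (filter P L) x = (if P x then cnt L x else 0)"
  using assms by (induction L) (auto simp: cnt_def)

lemma pchain_cnt: "of_int (pchain xs x) = cnt (pedges xs) x"
  by (simp add: pchain_def cnt_def rv_def)

lemma black_rv: "black_Xe S (rv e) = black_Xe S e"
  by (auto simp: black_Xe_def rv_def)
lemma white_rv: "white_Xe S (rv e) = white_Xe S e"
  by (auto simp: white_Xe_def rv_def)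

lemma black_xe:
  assumes "u \<noteq> v" "v \<noteq> w" "u \<noteq> w"
  shows "black_Xe S (xe (u,v,w)) \<longleftrightarrow> blk S u \<and> blk S w"
proof -
  have "(fst (xe (u,v,w)) - snd (xe (u,v,w))) \<union> (snd (xe (u,v,w)) - fst (xe (u,v,w))) = {u,w}"
    using assms by (auto simp: xe_def)
  then show ?thesis by (simp add: black_Xe_def)
qed

lemma white_xe:
  assumes "u \<noteq> v" "v \<noteq> w" "u \<noteq> w"
  shows "white_Xe S (xe (u,v,w)) \<longleftrightarrow> \<not> blk S u \<and> \<not> blk S w"
proof -
  have "(fst (xe (u,v,w)) - snd (xe (u,v,w))) \<union> (snd (xe (u,v,w)) - fst (xe (u,v,w))) = {u,w}"
    using assms by (auto simp: xe_def)
  then show ?thesis by (simp add: white_Xe_def)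
qed

lemma Pair_diff: "PF S \<theta> \<kappa> (\<lambda>e. c e - c' e) = PF S \<theta> \<kappa> c - PF S \<theta> \<kappa> c'"
  unfolding PF_def by (simp add: sum_subtractf[symmetric] algebra_simps)

lemma Pair_add: "PF S \<theta> \<kappa> (\<lambda>e. c e + c' e) = PF S \<theta> \<kappa> c + PF S \<theta> \<kappa> c'"
  unfolding PF_def by (simp add: sum.distrib[symmetric] algebra_simps)

lemma Pair_smult: "PF S \<theta> \<kappa> (\<lambda>e. k * c e) = of_int k * PF S \<theta> \<kappa> c"
  unfolding PF_def by (simp add: sum_distrib_left algebra_simps)

lemma Pair_zero: "PF S \<theta> \<kappa> (\<lambda>e. 0) = 0"
  unfolding PF_def by simp

lemma Pair_sum:
  assumes "finite A"
  shows "PF S \<theta> \<kappa> (\<lambda>e. \<Sum>x\<in>A. d x e) = (\<Sum>x\<in>A. PF S \<theta> \<kappa> (d x))"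
  using assms
proof (induction A rule: finite_induct)
  case empty
  then show ?case by (simp add: Pair_zero)
next
  case (insert x F)
  have "PF S \<theta> \<kappa> (\<lambda>e. \<Sum>x\<in>insert x F. d x e) = PF S \<theta> \<kappa> (\<lambda>e. d x e + (\<Sum>x\<in>F. d x e))"
    using insert by simp
  also have "\<dots> = PF S \<theta> \<kappa> (d x) + PF S \<theta> \<kappa> (\<lambda>e. \<Sum>x\<in>F. d x e)"
    by (rule Pair_add)
  finally show ?case using insert by simp
qed

lemma Pair_lin_\<theta>: "PF S (\<lambda>Q. a * \<theta> Q + b * \<theta>' Q) (\<lambda>Q. a * \<kappa> Q + b * \<kappa>' Q) d =
   a * PF S \<theta> \<kappa> d + b * PF S \<theta>' \<kappa>' d"
  unfolding PF_def sum_distrib_left sum.distrib[symmetric] by (rule sum.cong) (auto simp: algebra_simps)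

context DR begin

lemma holo_omF:
  assumes H: "holo_diff S \<omega>"
  defines "\<theta> \<equiv> \<lambda>Q. \<omega> (xe (T1 (quad S Q)))"
  shows "\<omega> = omF S \<theta> (\<lambda>Q. \<i> * rho S Q * \<theta> Q)"
    and "\<forall>v\<in>verts S. LV S \<theta> (\<lambda>Q. \<i> * rho S Q * \<theta> Q) v = 0"
proof -
  let ?\<kappa> = "\<lambda>Q. \<i> * rho S Q * \<theta> Q"
  have of: "one_form S \<omega>" using H by (simp add: holo_diff_def)
  have onxe: "\<omega> (xe t) = omF S \<theta> ?\<kappa> (xe t)" if Q: "Q \<in> faces S" and t: "t \<in> triples (quad S Q)" for Q t
  proof -
    obtain f where hol: "disc_holomorphic_on (rho S Q) (quad S Q) f"
      and df: "\<forall>(u, v, w)\<in>triples (quad S Q). \<omega> ({u, v}, {v, w}) = (f w - f u) / 2"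
      using H Q unfolding holo_diff_def by blast
    have df': "\<omega> (xe s) = (f (snd (snd s)) - f (fst s)) / 2" if "s \<in> triples (quad S Q)" for s
      using df that by (cases s) (auto simp: xe_def)
    note d1 = df'[OF T_in(1)] and d2 = df'[OF T_in(2)] and d3 = df'[OF T_in(3)] and d4 = df'[OF T_in(4)]
    have th: "\<theta> Q = (f (bp (quad S Q)) - f (bm (quad S Q))) / 2"
      using d1 by (simp add: \<theta>_def T1_def)
    have h: "f (wp (quad S Q)) - f (wm (quad S Q)) = \<i> * rho S Q * (f (bp (quad S Q)) - f (bm (quad S Q)))"
      using hol by (simp add: disc_holomorphic_on_def)
    have e1: "\<omega> (xe (T1 (quad S Q))) = \<theta> Q" by (simp add: \<theta>_def)
    have e2: "\<omega> (xe (T2 (quad S Q))) = ?\<kappa> Q"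
    proof -
      have "\<omega> (xe (T2 (quad S Q))) = (f (wp (quad S Q)) - f (wm (quad S Q))) / 2" using d2 by (simp add: T2_def)
      also have "\<dots> = \<i> * rho S Q * ((f (bp (quad S Q)) - f (bm (quad S Q))) / 2)" using h by simp
      finally show ?thesis unfolding th .
    qed
    have e3: "\<omega> (xe (T3 (quad S Q))) = - \<theta> Q"
    proof -
      have "\<omega> (xe (T3 (quad S Q))) = (f (bm (quad S Q)) - f (bp (quad S Q))) / 2" using d3 by (simp add: T3_def)
      also have "\<dots> = - ((f (bp (quad S Q)) - f (bm (quad S Q))) / 2)" by (simp add: field_simps)
      finally show ?thesis unfolding th .
    qed
    have e4: "\<omega> (xe (T4 (quad S Q))) = - ?\<kappa> Q"
    proof -
      have "\<omega> (xe (T4 (quad S Q))) = (f (wm (quad S Q)) - f (wp (quad S Q))) / 2" using d4 by (simp add: T4_def)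
      also have "\<dots> = - ((f (wp (quad S Q)) - f (wm (quad S Q))) / 2)" by (simp add: field_simps)
      also have "\<dots> = - (\<i> * rho S Q * ((f (bp (quad S Q)) - f (bm (quad S Q))) / 2))" using h by simp
      finally show ?thesis unfolding th .
    qed
    have "t = T1 (quad S Q) \<or> t = T2 (quad S Q) \<or> t = T3 (quad S Q) \<or> t = T4 (quad S Q)"
      using t by (simp add: triples_eq)
    then have "\<omega> (xe t) = val (quad S Q) (\<theta> Q) (?\<kappa> Q) t"
      using T_dist[OF Q] e1 e2 e3 e4 unfolding val_def by (elim disjE) (simp_all add: eq_commute)
    then show ?thesis using omF_xe[OF Q t] by simp
  qed
  show eq: "\<omega> = omF S \<theta> ?\<kappa>"
  proof
    fix e
    show "\<omega> e = omF S \<theta> ?\<kappa> e"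
    proof (cases "e \<in> Xedges S")
      case True
      then obtain Q t where Q: "Q \<in> faces S" and t: "t \<in> triples (quad S Q)"
        and e: "e = xe t \<or> e = rv (xe t)" using Xedges_iff by blast
      show ?thesis
      proof (cases "e = xe t")
        case True then show ?thesis using onxe[OF Q t] by simp
      next
        case False
        then have e: "e = rv (xe t)" using e by blast
        have "\<omega> e = - \<omega> (xe t)" using of xe_in_Xedges[OF Q t] unfolding one_form_def e rv_def by auto
        then show ?thesis using onxe[OF Q t] e by (simp add: omF_rv)
      qed
    next
      case False
      have "\<omega> e = 0" using of False unfolding one_form_def by blast
      moreover have "omF S \<theta> ?\<kappa> e = 0" using omF_one_form[of \<theta> ?\<kappa>] False unfolding one_form_def by blast
      ultimately show ?thesis by simp
    qed
  qed
  show "\<forall>v\<in>verts S. LV S \<theta> ?\<kappa> v = 0"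
    using H unfolding holo_diff_def closed_form_def eq sum_omF_Fv by blast
qed

lemma bper_omF: "bper S (omF S \<theta> \<kappa>) xs = 2 * PF S \<theta> (\<lambda>_. 0) (pchain xs)"
proof -
  let ?L = "filter (black_Xe S) (pedges xs)"
  have "sum_list (map (omF S \<theta> \<kappa>) ?L) = (\<Sum>Q\<in>faces S. sum_list (map (\<lambda>e. \<theta> Q * (ind e (xe (T1 (quad S Q))) - ind e (xe (T3 (quad S Q))))
      + \<kappa> Q * (ind e (xe (T2 (quad S Q))) - ind e (xe (T4 (quad S Q))))) ?L))"
    unfolding omF_def by (rule sum_list_sum_swap)
  also have "\<dots> = PF S \<theta> (\<lambda>_. 0) (pchain xs)"
    unfolding PF_def sum_list_ind4
  proof (rule sum.cong[OF refl])
    fix Q assume Q: "Q \<in> faces S"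
    note fd = face_dist[OF Q] and fp = face_props[OF Q]
    have b1: "black_Xe S (xe (T1 (quad S Q)))" by (simp add: T1_def black_xe fd fd[THEN not_sym] fp)
    have b3: "black_Xe S (xe (T3 (quad S Q)))" by (simp add: T3_def black_xe fd fd[THEN not_sym] fp)
    have b2: "\<not> black_Xe S (xe (T2 (quad S Q)))" by (simp add: T2_def black_xe fd fd[THEN not_sym] fp)
    have b4: "\<not> black_Xe S (xe (T4 (quad S Q)))" by (simp add: T4_def black_xe fd fd[THEN not_sym] fp)
    show "\<theta> Q * (cnt ?L (xe (T1 (quad S Q))) - cnt ?L (xe (T3 (quad S Q)))) +
          \<kappa> Q * (cnt ?L (xe (T2 (quad S Q))) - cnt ?L (xe (T4 (quad S Q)))) =
          \<theta> Q * of_int (pchain xs (xe (T1 (quad S Q))) - pchain xs (xe (T3 (quad S Q)))) +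
          0 * of_int (pchain xs (xe (T2 (quad S Q))) - pchain xs (xe (T4 (quad S Q))))"
      using b1 b2 b3 b4 by (simp add: cnt_filter black_rv pchain_cnt)
  qed
  finally show ?thesis by (simp add: bper_def)
qed

lemma wper_omF: "wper S (omF S \<theta> \<kappa>) xs = 2 * PF S (\<lambda>_. 0) \<kappa> (pchain xs)"
proof -
  let ?L = "filter (white_Xe S) (pedges xs)"
  have "sum_list (map (omF S \<theta> \<kappa>) ?L) = (\<Sum>Q\<in>faces S. sum_list (map (\<lambda>e. \<theta> Q * (ind e (xe (T1 (quad S Q))) - ind e (xe (T3 (quad S Q))))
      + \<kappa> Q * (ind e (xe (T2 (quad S Q))) - ind e (xe (T4 (quad S Q))))) ?L))"
    unfolding omF_def by (rule sum_list_sum_swap)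
  also have "\<dots> = PF S (\<lambda>_. 0) \<kappa> (pchain xs)"
    unfolding PF_def sum_list_ind4
  proof (rule sum.cong[OF refl])
    fix Q assume Q: "Q \<in> faces S"
    note fd = face_dist[OF Q] and fp = face_props[OF Q]
    have b1: "\<not> white_Xe S (xe (T1 (quad S Q)))" by (simp add: T1_def white_xe fd fd[THEN not_sym] fp)
    have b3: "\<not> white_Xe S (xe (T3 (quad S Q)))" by (simp add: T3_def white_xe fd fd[THEN not_sym] fp)
    have b2: "white_Xe S (xe (T2 (quad S Q)))" by (simp add: T2_def white_xe fd fd[THEN not_sym] fp)
    have b4: "white_Xe S (xe (T4 (quad S Q)))" by (simp add: T4_def white_xe fd fd[THEN not_sym] fp)
    show "\<theta> Q * (cnt ?L (xe (T1 (quad S Q))) - cnt ?L (xe (T3 (quad S Q)))) +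
          \<kappa> Q * (cnt ?L (xe (T2 (quad S Q))) - cnt ?L (xe (T4 (quad S Q)))) =
          0 * of_int (pchain xs (xe (T1 (quad S Q))) - pchain xs (xe (T3 (quad S Q)))) +
          \<kappa> Q * of_int (pchain xs (xe (T2 (quad S Q))) - pchain xs (xe (T4 (quad S Q))))"
      using b1 b2 b3 b4 by (simp add: cnt_filter white_rv pchain_cnt)
  qed
  finally show ?thesis by (simp add: wper_def)
qed

lemma cc_FQ:
  assumes Q0: "Q0 \<in> faces S" and Q: "Q \<in> faces S" and t: "t \<in> triples (quad S Q)"
  shows "cycle_chain (FQ_edges (quad S Q0)) (xe t) = (if Q = Q0 then 1 else 0)"
proof -
  have a: "xe t \<in> FQ_edges (quad S Q0) \<longleftrightarrow> Q = Q0"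
  proof
    assume "xe t \<in> FQ_edges (quad S Q0)"
    then obtain t' where t': "t' \<in> triples (quad S Q0)" "xe t = xe t'" unfolding FQ_edges_eq by blast
    then show "Q = Q0" using xe_inj[OF Q Q0 t t'(1)] by blast
  next
    assume "Q = Q0" then show "xe t \<in> FQ_edges (quad S Q0)" unfolding FQ_edges_eq using t by blast
  qed
  have b: "(snd (xe t), fst (xe t)) \<notin> FQ_edges (quad S Q0)"
  proof
    assume "(snd (xe t), fst (xe t)) \<in> FQ_edges (quad S Q0)"
    then obtain t' where t': "t' \<in> triples (quad S Q0)" "rv (xe t) = xe t'" unfolding FQ_edges_eq rv_def by blast
    then show False using xe_rv_ne[OF Q0 Q t'(1) t] by simp
  qed
  show ?thesis unfolding cycle_chain_def using a b by auto
qed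

lemma cc_Fv:
  assumes Q: "Q \<in> faces S" and t: "t \<in> triples (quad S Q)"
  shows "cycle_chain (Fv_edges S v) (xe t) = (if fst (snd t) = v then 1 else 0)"
proof -
  have a: "xe t \<in> Fv_edges S v \<longleftrightarrow> fst (snd t) = v"
  proof
    assume "xe t \<in> Fv_edges S v"
    then obtain Q' t' where t': "Q' \<in> faces S" "t' \<in> triples (quad S Q')" "fst (snd t') = v" "xe t = xe t'"
      unfolding Fv_edges_eq by auto
    then show "fst (snd t) = v" using xe_inj[OF Q t'(1) t t'(2)] by simp
  next
    assume "fst (snd t) = v"
    then have "(Q,t) \<in> (SIGMA Q:faces S. {t\<in>triples (quad S Q). fst (snd t) = v})" using Q t by simp
    then show "xe t \<in> Fv_edges S v" unfolding Fv_edges_eq by force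
  qed
  have b: "(snd (xe t), fst (xe t)) \<notin> Fv_edges S v"
  proof
    assume "(snd (xe t), fst (xe t)) \<in> Fv_edges S v"
    then obtain Q' t' where t': "Q' \<in> faces S" "t' \<in> triples (quad S Q')" "rv (xe t) = xe t'"
      unfolding Fv_edges_eq rv_def by auto
    then show False using xe_rv_ne[OF t'(1) Q t'(2) t] by simp
  qed
  show ?thesis unfolding cycle_chain_def using a b by auto
qed

lemma Pair_FQ: "Q0 \<in> faces S \<Longrightarrow> PF S \<theta> \<kappa> (cycle_chain (FQ_edges (quad S Q0))) = 0"
  unfolding PF_def by (rule sum.neutral) (simp add: cc_FQ T_in)

lemma Pair_Fv: "PF S \<theta> \<kappa> (cycle_chain (Fv_edges S v)) = LV S \<theta> \<kappa> v"
  unfolding PF_def LV_def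
  apply (rule sum.cong[OF refl])
  apply (subst cc_Fv[OF _ T_in(1)], assumption)
  apply (subst cc_Fv[OF _ T_in(2)], assumption)
  apply (subst cc_Fv[OF _ T_in(3)], assumption)
  apply (subst cc_Fv[OF _ T_in(4)], assumption)
  by (simp add: T1_def T2_def T3_def T4_def)

lemma Pair_hom:
  assumes H: "homologous S c c'" and L: "\<forall>v\<in>verts S. LV S \<theta> \<kappa> v = 0"
  shows "PF S \<theta> \<kappa> c = PF S \<theta> \<kappa> c'"
proof -
  obtain cf cv where eq: "\<forall>e. c e - c' e =
      (\<Sum>Q\<in>faces S. cf Q * cycle_chain (FQ_edges (quad S Q)) e) +
      (\<Sum>v\<in>verts S. cv v * cycle_chain (Fv_edges S v) e)"
    using H unfolding homologous_def by blast
  have "PF S \<theta> \<kappa> c - PF S \<theta> \<kappa> c' = PF S \<theta> \<kappa> (\<lambda>e. c e - c' e)" by (simp add: Pair_diff)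
  also have "\<dots> = PF S \<theta> \<kappa> (\<lambda>e. (\<Sum>Q\<in>faces S. cf Q * cycle_chain (FQ_edges (quad S Q)) e) +
      (\<Sum>v\<in>verts S. cv v * cycle_chain (Fv_edges S v) e))" using eq by (intro arg_cong[where f="PF S \<theta> \<kappa>"] ext) blast
  also have "\<dots> = (\<Sum>Q\<in>faces S. of_int (cf Q) * PF S \<theta> \<kappa> (cycle_chain (FQ_edges (quad S Q))))
     + (\<Sum>v\<in>verts S. of_int (cv v) * PF S \<theta> \<kappa> (cycle_chain (Fv_edges S v)))"
    by (simp add: Pair_add Pair_sum fin_faces fin_verts Pair_smult)
  also have "\<dots> = 0" using L by (simp add: Pair_FQ Pair_Fv)
  finally show ?thesis by simp
qed

end


lemma pedges_Nil[simp]: "pedges [] = []" by (simp add: pedges_def)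
lemma pedges_single[simp]: "pedges [x] = []" by (simp add: pedges_def)
lemma pedges_Cons2[simp]: "pedges (x # y # zs) = (x, y) # pedges (y # zs)" by (simp add: pedges_def)
lemma pedges_Cons: "xs \<noteq> [] \<Longrightarrow> pedges (x # xs) = (x, hd xs) # pedges xs"
  by (cases xs) auto

lemma pedges_append:
  "xs \<noteq> [] \<Longrightarrow> ys \<noteq> [] \<Longrightarrow> pedges (xs @ ys) = pedges xs @ [(last xs, hd ys)] @ pedges ys"
proof (induction xs)
  case Nil then show ?case by simp
next
  case (Cons a xs)
  show ?case
  proof (cases "xs = []")
    case True
    then show ?thesis using Cons.prems by (simp add: pedges_Cons)
  next
    case False
    then show ?thesis using Cons by (simp add: pedges_Cons)
  qed
qed

lemma pedges_rev: "pedges (rev xs) = rev (map rv (pedges xs))"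
proof (induction xs)
  case Nil then show ?case by simp
next
  case (Cons a xs)
  show ?case
  proof (cases "xs = []")
    case True then show ?thesis by simp
  next
    case False
    have "pedges (rev (a # xs)) = pedges (rev xs @ [a])" by simp
    also have "\<dots> = pedges (rev xs) @ [(hd xs, a)]"
      using False by (simp add: pedges_append last_rev)
    finally show ?thesis using Cons.IH False by (simp add: pedges_Cons rv_def)
  qed
qed

lemma telescope:
  "xs \<noteq> [] \<Longrightarrow> sum_list (map (\<lambda>e. F (snd e) - F (fst e)) (pedges xs)) = F (last xs) - (F (hd xs) :: 'a :: ab_group_add)"
proof (induction xs)
  case Nil then show ?case by simp
next
  case (Cons a xs)
  then show ?case by (cases "xs = []") (simp_all add: pedges_Cons)
qed

lemma sum_omF_path: "sum_list (map (omF S \<theta> \<kappa>) (pedges xs)) = PF S \<theta> \<kappa> (pchain xs)"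
  unfolding omF_def sum_list_sum_swap sum_list_ind4 PF_def pchain_cnt[symmetric] by simp

lemma Bcount_eq: "Bcount xs q = pchain xs (xe (T1 q)) - pchain xs (xe (T3 q))"
proof -
  have "pchain xs ({bm q, wp q}, {wp q, bp q}) = - pchain xs (xe (T3 q))"
    by (simp add: pchain_def xe_def T3_def insert_commute)
  then show ?thesis by (simp add: Bcount_def xe_def T1_def)
qed

lemma Wcount_eq: "Wcount xs q = pchain xs (xe (T2 q)) - pchain xs (xe (T4 q))"
proof -
  have "pchain xs ({wm q, bm q}, {bm q, wp q}) = - pchain xs (xe (T4 q))"
    by (simp add: pchain_def xe_def T4_def insert_commute)
  then show ?thesis by (simp add: Wcount_def xe_def T2_def)
qed

lemma PF_Bcount: "PF S \<theta> (\<lambda>_. 0) (pchain xs) = (\<Sum>Q\<in>faces S. \<theta> Q * of_int (Bcount xs (quad S Q)))"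
  by (simp add: PF_def Bcount_eq)

lemma PF_Wcount: "PF S (\<lambda>_. 0) \<kappa> (pchain xs) = (\<Sum>Q\<in>faces S. \<kappa> Q * of_int (Wcount xs (quad S Q)))"
  by (simp add: PF_def Wcount_eq)

context DR begin

lemma omF_Xedge_cases:
  assumes "e \<in> Xedges S"
  obtains Q where "Q \<in> faces S" "e = xe (T1 (quad S Q)) \<or> e = xe (T2 (quad S Q)) \<or> e = xe (T3 (quad S Q)) \<or> e = xe (T4 (quad S Q))
    \<or> e = rv (xe (T1 (quad S Q))) \<or> e = rv (xe (T2 (quad S Q))) \<or> e = rv (xe (T3 (quad S Q))) \<or> e = rv (xe (T4 (quad S Q)))"
  using assms unfolding Xedges_iff triples_eq by blast

lemma Bcount_closed:
  assumes c: "closed_Xpath S xs" and b: "blk S b"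
  shows "LV S (\<lambda>_. 0) (\<lambda>Q. of_int (Bcount xs (quad S Q))) b = 0"
proof -
  define F :: "'v set \<Rightarrow> complex" where "F x = (if b \<in> x then 1 else 0)" for x
  define cb where "cb Q = (if bp (quad S Q) = b then 1 else 0) - (if bm (quad S Q) = b then 1 else (0::complex))" for Q
  have D: "F (snd e) - F (fst e) = omF S cb (\<lambda>_. 0) e" if e: "e \<in> Xedges S" for e
  proof -
    obtain Q where Q: "Q \<in> faces S" and cases: "e = xe (T1 (quad S Q)) \<or> e = xe (T2 (quad S Q)) \<or> e = xe (T3 (quad S Q)) \<or> e = xe (T4 (quad S Q))
    \<or> e = rv (xe (T1 (quad S Q))) \<or> e = rv (xe (T2 (quad S Q))) \<or> e = rv (xe (T3 (quad S Q))) \<or> e = rv (xe (T4 (quad S Q)))"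
      using omF_Xedge_cases[OF e] by blast
    have nw: "b \<noteq> wm (quad S Q)" "b \<noteq> wp (quad S Q)" using b face_props[OF Q] by auto
    show ?thesis using cases
      by (elim disjE; hypsubst; simp only: omF_rv omF_T[OF Q];
          auto simp: F_def cb_def xe_def rv_def T1_def T2_def T3_def T4_def nw)
  qed
  have ne: "xs \<noteq> []" using c by (auto simp: closed_Xpath_def)
  have sub: "set (pedges xs) \<subseteq> Xedges S" using c by (simp add: closed_Xpath_def)
  have "0 = sum_list (map (\<lambda>e. F (snd e) - F (fst e)) (pedges xs))"
    using telescope[OF ne, of F] c by (simp add: closed_Xpath_def)
  also have "\<dots> = sum_list (map (omF S cb (\<lambda>_. 0)) (pedges xs))"
    using sub D by (intro arg_cong[where f=sum_list] map_cong) auto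
  also have "\<dots> = PF S cb (\<lambda>_. 0) (pchain xs)" by (rule sum_omF_path)
  also have "\<dots> = LV S (\<lambda>_. 0) (\<lambda>Q. of_int (Bcount xs (quad S Q))) b"
    unfolding PF_Bcount LV_def cb_def by (rule sum.cong) (auto simp: algebra_simps)
  finally show ?thesis by simp
qed

end


lemma sum_list_neg_rev: "sum_list (map (\<lambda>x. - f x) (rev L)) = - sum_list (map f L :: 'a :: ab_group_add list)"
  by (induction L) auto

lemma sum_omF_rev: "sum_list (map (omF S \<theta> \<kappa>) (rev (map rv L))) = - sum_list (map (omF S \<theta> \<kappa>) L)"
  by (induction L) (auto simp: omF_rv)

lemma nbrs_sym: "u \<in> nbrs S v \<longleftrightarrow> v \<in> nbrs S u"
  by (simp add: nbrs_def insert_commute)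

context DR begin

lemma Xedges_rv: "e \<in> Xedges S \<Longrightarrow> rv e \<in> Xedges S"
  unfolding Xedges_iff by (metis rv_rv)

lemma link_conn: "v \<in> verts S \<Longrightarrow> u \<in> nbrs S v \<Longrightarrow> w \<in> nbrs S v \<Longrightarrow> (u, w) \<in> (link_rel S v)\<^sup>*"
  using drs unfolding discrete_riemann_surface_def by blast

lemma adj_conn: "u \<in> verts S \<Longrightarrow> w \<in> verts S \<Longrightarrow> (u, w) \<in> (adj_rel S)\<^sup>*"
  using drs unfolding discrete_riemann_surface_def by blast

lemma nbrs_verts: "z \<in> nbrs S v \<Longrightarrow> v \<in> verts S \<and> z \<in> verts S"
  unfolding nbrs_def lam_edges_def verts_eq quad_edges_def qverts_def cyc_def by auto

lemma triple_nbrs: "Q \<in> faces S \<Longrightarrow> (p, v, s) \<in> triples (quad S Q) \<Longrightarrow> p \<in> nbrs S v \<and> s \<in> nbrs S v"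
  unfolding nbrs_def lam_edges_def triples_def quad_edges_def by (auto simp: insert_commute)

lemma triple_nbrs': "Q \<in> faces S \<Longrightarrow> t \<in> triples (quad S Q) \<Longrightarrow> fst t \<in> nbrs S (fst (snd t)) \<and> snd (snd t) \<in> nbrs S (fst (snd t))"
  using triple_nbrs by (cases t) auto

lemma link_X:
  assumes "(u, w) \<in> (link_rel S v)\<^sup>*"
  shows "({u, v}, {w, v}) \<in> (Xedges S)\<^sup>*"
  using assms
proof (induction rule: rtrancl_induct)
  case base then show ?case by simp
next
  case (step p s)
  then obtain Q where Q: "Q \<in> faces S" and t: "(p, v, s) \<in> triples (quad S Q)"
    unfolding link_rel_def by blast
  have "xe (p, v, s) \<in> Xedges S" using xe_in_Xedges[OF Q t] by simp
  then have "({p, v}, {s, v}) \<in> Xedges S" by (simp add: xe_def insert_commute)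
  with step.IH show ?case by simp
qed

lemma adj_nbrs: "(w, u) \<in> adj_rel S \<Longrightarrow> u \<in> nbrs S w \<and> w \<in> nbrs S u"
  unfolding adj_rel_def nbrs_def lam_edges_def dedges_def quad_edges_def by (auto simp: insert_commute)

lemma X_reach:
  assumes z0: "z0 \<in> nbrs S u0" and z: "z \<in> nbrs S u"
  shows "({u0, z0}, {u, z}) \<in> (Xedges S)\<^sup>*"
proof -
  have "(u0, u) \<in> (adj_rel S)\<^sup>*" using adj_conn nbrs_verts z0 z by blast
  then show ?thesis using z
  proof (induction arbitrary: z rule: rtrancl_induct)
    case base
    have "({z0, u0}, {z, u0}) \<in> (Xedges S)\<^sup>*"
      using link_X link_conn nbrs_verts z0 base by blast
    then show ?case by (simp add: insert_commute)
  next
    case (step w u)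
    have "u \<in> nbrs S w" "w \<in> nbrs S u" using adj_nbrs[OF step.hyps(2)] by auto
    then have a: "({u0, z0}, {w, u}) \<in> (Xedges S)\<^sup>*" using step.IH by blast
    have "({w, u}, {z, u}) \<in> (Xedges S)\<^sup>*"
      using link_X link_conn nbrs_verts \<open>w \<in> nbrs S u\<close> step.prems by (metis insert_commute)
    with a show ?case by (simp add: insert_commute)
  qed
qed

lemma rtrancl_path:
  assumes "(x, y) \<in> (Xedges S)\<^sup>*"
  shows "\<exists>p. p \<noteq> [] \<and> hd p = x \<and> last p = y \<and> set (pedges p) \<subseteq> Xedges S"
  using assms
proof (induction rule: rtrancl_induct)
  case base then show ?case by (intro exI[of _ "[x]"]) simp
next
  case (step y z)
  then obtain p where p: "p \<noteq> []" "hd p = x" "last p = y" "set (pedges p) \<subseteq> Xedges S" by blast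
  have "pedges (p @ [z]) = pedges p @ [(y, z)]" using p by (simp add: pedges_append)
  then show ?case using p step.hyps(2) by (intro exI[of _ "p @ [z]"]) auto
qed

lemma faces_ex: obtains Q0 where "Q0 \<in> faces S" using faces_ne by blast

lemma exact_pairing:
  assumes Z: "\<forall>c. closed_Xpath S c \<longrightarrow> PF S (\<lambda>_. 0) \<zeta> (pchain c) = 0"
    and L\<theta>: "\<forall>v\<in>verts S. LV S \<theta> (\<lambda>_. 0) v = 0"
  shows "(\<Sum>Q\<in>faces S. \<theta> Q * \<zeta> Q) = 0"
proof -
  obtain Q0 where Q0: "Q0 \<in> faces S" using faces_ex by blast
  define u0 where "u0 = bm (quad S Q0)"
  define z0 where "z0 = wm (quad S Q0)"
  have z0: "z0 \<in> nbrs S u0" using triple_nbrs'[OF Q0 T_in(4)[of "quad S Q0"]]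
    by (simp add: T4_def u0_def z0_def)
  define x0 where "x0 = {u0, z0}"
  let ?R = "\<lambda>x. (x0, x) \<in> (Xedges S)\<^sup>*"
  let ?\<omega> = "omF S (\<lambda>_. 0) \<zeta>"
  define P where "P x = (SOME p. p \<noteq> [] \<and> hd p = x0 \<and> last p = x \<and> set (pedges p) \<subseteq> Xedges S)" for x
  define Pot where "Pot x = sum_list (map ?\<omega> (pedges (P x)))" for x
  have P: "P x \<noteq> [] \<and> hd (P x) = x0 \<and> last (P x) = x \<and> set (pedges (P x)) \<subseteq> Xedges S" if "?R x" for x
    unfolding P_def by (rule someI_ex) (rule rtrancl_path[OF that])
  have reach: "?R {u, z}" if "z \<in> nbrs S u" for u z
    unfolding x0_def using X_reach[OF z0 that] .
  have key: "Pot y - Pot x = ?\<omega> (x, y)" if xy: "(x, y) \<in> Xedges S" and rx: "?R x" and ry: "?R y" for x y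
  proof -
    define c where "c = P x @ rev (P y)"
    note Px = P[OF rx] and Py = P[OF ry]
    have pe: "pedges c = pedges (P x) @ [(x, y)] @ rev (map rv (pedges (P y)))"
      unfolding c_def using Px Py by (simp add: pedges_append pedges_rev hd_rev)
    have cl: "closed_Xpath S c"
      unfolding closed_Xpath_def
    proof (intro conjI)
      show "2 \<le> length c" using Px Py by (cases "P x"; cases "P y") (auto simp: c_def)
      show "hd c = last c" using Px Py by (simp add: c_def hd_append last_rev)
      show "set (pedges c) \<subseteq> Xedges S" unfolding pe using Px Py xy Xedges_rv by auto
    qed
    have "0 = PF S (\<lambda>_. 0) \<zeta> (pchain c)" using Z cl by simp
    also have "\<dots> = sum_list (map ?\<omega> (pedges c))" by (rule sum_omF_path[symmetric])
    also have "\<dots> = Pot x + ?\<omega> (x, y) - Pot y"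
      unfolding pe Pot_def by (simp add: sum_omF_rev)
    finally show ?thesis by (simp add: algebra_simps)
  qed
  have white0: "?\<omega> (xe t) = 0" if Q: "Q \<in> faces S" and t: "t \<in> triples (quad S Q)" and w: "\<not> blk S (fst (snd t))" for Q t
  proof -
    have "t = T1 (quad S Q) \<or> t = T3 (quad S Q)"
      using t w face_props[OF Q] by (auto simp: triples_eq T2_def T4_def)
    then show ?thesis using omF_T[OF Q] by auto
  qed
  have const: "Pot {u, w} = Pot {u', w}" if w: "\<not> blk S w" "w \<in> verts S" and u: "u \<in> nbrs S w" and u': "u' \<in> nbrs S w" for w u u'
  proof -
    have "(u, u') \<in> (link_rel S w)\<^sup>*" using link_conn w u u' by blast
    then show ?thesis using u'
    proof (induction rule: rtrancl_induct)
      case base then show ?case by simp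
    next
      case (step p s)
      obtain Q where Q: "Q \<in> faces S" and t: "(p, w, s) \<in> triples (quad S Q)"
        using step.hyps(2) unfolding link_rel_def by blast
      have ps: "p \<in> nbrs S w" "s \<in> nbrs S w" using triple_nbrs[OF Q t] by auto
      have e: "({p, w}, {s, w}) \<in> Xedges S" using xe_in_Xedges(1)[OF Q t] by (simp add: xe_def insert_commute)
      have "Pot {s, w} - Pot {p, w} = ?\<omega> ({p, w}, {s, w})"
        by (rule key[OF e]) (use reach ps in \<open>auto simp: insert_commute\<close>)
      also have "\<dots> = ?\<omega> (xe (p, w, s))" by (simp add: xe_def insert_commute)
      also have "\<dots> = 0" using white0[OF Q t] w by simp
      finally show ?case using step.IH ps by simp
    qed
  qed
  define gw where "gw w = Pot {SOME u. u \<in> nbrs S w, w}" for w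
  have gw: "Pot {u, w} = gw w" if "\<not> blk S w" "u \<in> nbrs S w" for u w
  proof -
    have "(SOME u. u \<in> nbrs S w) \<in> nbrs S w" using that by (metis someI_ex)
    then show ?thesis unfolding gw_def using const that nbrs_verts by blast
  qed
  have zeta: "\<zeta> Q = gw (wp (quad S Q)) - gw (wm (quad S Q))" if Q: "Q \<in> faces S" for Q
  proof -
    have t2: "T2 (quad S Q) \<in> triples (quad S Q)" by (rule T_in)
    have n1: "bp (quad S Q) \<in> nbrs S (wp (quad S Q))" "bp (quad S Q) \<in> nbrs S (wm (quad S Q))"
      using triple_nbrs'[OF Q t2] by (auto simp: T2_def nbrs_sym)
    have e: "({wm (quad S Q), bp (quad S Q)}, {bp (quad S Q), wp (quad S Q)}) \<in> Xedges S"
      using xe_in_Xedges(1)[OF Q t2] by (simp add: xe_def T2_def)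
    have "\<zeta> Q = ?\<omega> (xe (T2 (quad S Q)))" using omF_T[OF Q] by simp
    also have "\<dots> = Pot {bp (quad S Q), wp (quad S Q)} - Pot {wm (quad S Q), bp (quad S Q)}"
      using key[OF e] reach n1 by (simp add: xe_def T2_def insert_commute)
    also have "\<dots> = gw (wp (quad S Q)) - gw (wm (quad S Q))"
    proof -
      have a: "Pot {bp (quad S Q), wp (quad S Q)} = gw (wp (quad S Q))"
        using gw[OF _ n1(1)] face_props[OF Q] by simp
      have b: "Pot {bp (quad S Q), wm (quad S Q)} = gw (wm (quad S Q))"
        using gw[OF _ n1(2)] face_props[OF Q] by simp
      show ?thesis using a b by (simp add: insert_commute)
    qed
    finally show ?thesis .
  qed
  have "(\<Sum>Q\<in>faces S. \<theta> Q * \<zeta> Q) = (\<Sum>Q\<in>faces S. \<theta> Q * gw (wp (quad S Q)) - \<theta> Q * gw (wm (quad S Q)))"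
    by (intro sum.cong refl) (simp add: zeta algebra_simps)
  also have "\<dots> = - (\<Sum>w\<in>verts S. gw w * LV S \<theta> (\<lambda>_. 0) w)"
  proof -
    have "(\<Sum>w\<in>verts S. gw w * LV S \<theta> (\<lambda>_. 0) w) =
       (\<Sum>w\<in>verts S. \<Sum>Q\<in>faces S. (if wm (quad S Q) = w then gw w * \<theta> Q else 0) - (if wp (quad S Q) = w then gw w * \<theta> Q else 0))"
      unfolding LV_def sum_distrib_left by (intro sum.cong refl) (auto simp: algebra_simps)
    also have "\<dots> = (\<Sum>Q\<in>faces S. \<Sum>w\<in>verts S. (if wm (quad S Q) = w then gw w * \<theta> Q else 0) - (if wp (quad S Q) = w then gw w * \<theta> Q else 0))"
      by (rule sum.swap)
    also have "\<dots> = (\<Sum>Q\<in>faces S. gw (wm (quad S Q)) * \<theta> Q - gw (wp (quad S Q)) * \<theta> Q)"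
      using face_verts fin_verts by (intro sum.cong refl) (simp add: sum_subtractf sum.delta)
    finally show ?thesis by (simp add: sum_subtractf algebra_simps)
  qed
  also have "\<dots> = 0" using L\<theta> by simp
  finally show ?thesis .
qed

end


lemma LV_split: "LV S \<theta> \<kappa> v = LV S \<theta> (\<lambda>_. 0) v + LV S (\<lambda>_. 0) \<kappa> v"
  unfolding LV_def sum.distrib[symmetric] by (rule sum.cong) auto

lemma LV_cnj: "LV S (\<lambda>_. 0) (\<lambda>Q. cnj (\<kappa> Q)) v = cnj (LV S (\<lambda>_. 0) \<kappa> v)"
  unfolding LV_def cnj_sum by (rule sum.cong) auto

lemma PF_cnj: "PF S (\<lambda>_. 0) (\<lambda>Q. cnj (\<kappa> Q)) d = cnj (PF S (\<lambda>_. 0) \<kappa> d)"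
  unfolding PF_def by (simp add: cnj_sum)

lemma LV0_diff: "LV S (\<lambda>_. 0) (\<lambda>Q. a Q - b Q) v = LV S (\<lambda>_. 0) a v - LV S (\<lambda>_. 0) b v"
  unfolding LV_def sum_subtractf[symmetric] by (rule sum.cong) auto
lemma LV0_sum: "LV S (\<lambda>_. 0) (\<lambda>Q. \<Sum>i\<in>I. f i Q) v = (\<Sum>i\<in>I. LV S (\<lambda>_. 0) (f i) v)"
  unfolding LV_def by (subst sum.swap) (rule sum.cong, auto simp: sum_subtractf)
lemma LV0_scale: "LV S (\<lambda>_. 0) (\<lambda>Q. c * h Q) v = c * LV S (\<lambda>_. 0) h v"
  unfolding LV_def sum_distrib_left by (rule sum.cong) auto
lemma PF0_diff: "PF S (\<lambda>_. 0) (\<lambda>Q. a Q - b Q) d = PF S (\<lambda>_. 0) a d - PF S (\<lambda>_. 0) b d"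
  unfolding PF_def sum_subtractf[symmetric] by (rule sum.cong) (auto simp: algebra_simps)
lemma PF0_sum: "PF S (\<lambda>_. 0) (\<lambda>Q. \<Sum>i\<in>I. f i Q) d = (\<Sum>i\<in>I. PF S (\<lambda>_. 0) (f i) d)"
  unfolding PF_def by (subst sum.swap) (rule sum.cong, auto simp: sum_distrib_right)
lemma PF0_scale: "PF S (\<lambda>_. 0) (\<lambda>Q. c * h Q) d = c * PF S (\<lambda>_. 0) h d"
  unfolding PF_def sum_distrib_left by (rule sum.cong) auto

lemma LV_lin: "LV S (\<lambda>_. 0) (\<lambda>Q. a Q - (\<Sum>i\<in>I. c i * h i Q)) v =
   LV S (\<lambda>_. 0) a v - (\<Sum>i\<in>I. c i * LV S (\<lambda>_. 0) (h i) v)"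
  by (simp add: LV0_diff LV0_sum LV0_scale)

lemma PF_lin: "PF S (\<lambda>_. 0) (\<lambda>Q. a Q - (\<Sum>i\<in>I. c i * h i Q)) d =
   PF S (\<lambda>_. 0) a d - (\<Sum>i\<in>I. c i * PF S (\<lambda>_. 0) (h i) d)"
  by (simp add: PF0_diff PF0_sum PF0_scale)

lemma PF_intersection:
  "PF S (\<lambda>_. 0) (\<lambda>Q. of_int (Bcount x (quad S Q))) (pchain y) = of_int (intersection S x y)"
  unfolding PF_Wcount intersection_def by simp

lemma cnj_i_mult: "\<theta> * cnj (\<i> * r * \<theta>) = - \<i> * (cnj r * complex_of_real ((cmod \<theta>)\<^sup>2))"
proof -
  have "\<theta> * cnj \<theta> = complex_of_real ((cmod \<theta>)\<^sup>2)" using complex_norm_square[of \<theta>] by simp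
  then show ?thesis by (simp add: algebra_simps)
qed

context DR begin

lemma LV_parts:
  assumes "\<forall>v\<in>verts S. LV S \<theta> \<kappa> v = 0"
  shows "\<forall>v\<in>verts S. LV S \<theta> (\<lambda>_. 0) v = 0" "\<forall>v\<in>verts S. LV S (\<lambda>_. 0) \<kappa> v = 0"
proof -
  have w: "LV S (\<lambda>_. 0) \<kappa> v = 0" if "\<not> blk S v" for v
    unfolding LV_def using face_props that by (intro sum.neutral) auto
  have b: "LV S \<theta> (\<lambda>_. 0) v = 0" if "blk S v" for v
    unfolding LV_def using face_props that by (intro sum.neutral) auto
  show "\<forall>v\<in>verts S. LV S \<theta> (\<lambda>_. 0) v = 0" "\<forall>v\<in>verts S. LV S (\<lambda>_. 0) \<kappa> v = 0"
    using assms LV_split[of S \<theta> \<kappa>] w b by (metis add.right_neutral add.left_neutral)+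
qed

lemma Bcount_closed_all:
  assumes c: "closed_Xpath S xs"
  shows "LV S (\<lambda>_. 0) (\<lambda>Q. of_int (Bcount xs (quad S Q))) v = 0"
proof (cases "blk S v")
  case True then show ?thesis using Bcount_closed[OF c] by blast
next
  case False
  then show ?thesis unfolding LV_def using face_props by (intro sum.neutral) auto
qed

lemma uniqueness:
  assumes SB: "symplectic_basis S g \<alpha> \<beta>"
    and L: "\<forall>v\<in>verts S. LV S \<theta> (\<lambda>Q. \<i> * rho S Q * \<theta> Q) v = 0"
    and A: "\<forall>j<g. PF S \<theta> (\<lambda>_. 0) (pchain (\<alpha> j)) = 0 \<and> PF S (\<lambda>_. 0) (\<lambda>Q. \<i> * rho S Q * \<theta> Q) (pchain (\<alpha> j)) = 0"
  shows "\<forall>Q\<in>faces S. \<theta> Q = 0"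
proof -
  define \<kappa> where "\<kappa> Q = \<i> * rho S Q * \<theta> Q" for Q
  have L\<theta>: "\<forall>v\<in>verts S. LV S \<theta> (\<lambda>_. 0) v = 0" and L\<kappa>: "\<forall>v\<in>verts S. LV S (\<lambda>_. 0) \<kappa> v = 0"
    using LV_parts[OF L] unfolding \<kappa>_def by auto
  have cp: "closed_Xpath S (\<alpha> i)" "closed_Xpath S (\<beta> i)" if "i < g" for i
    using SB that by (auto simp: symplectic_basis_def)
  have int: "intersection S (\<alpha> i) (\<alpha> j) = 0" "intersection S (\<alpha> i) (\<beta> j) = (if i = j then 1 else 0)"
    if "i < g" "j < g" for i j
    using SB that unfolding symplectic_basis_def by auto
  define B where "B i = PF S (\<lambda>_. 0) \<kappa> (pchain (\<beta> i))" for i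
  define Bc where "Bc i Q = complex_of_int (Bcount (\<alpha> i) (quad S Q))" for i Q
  define \<zeta> where "\<zeta> Q = cnj (\<kappa> Q) - (\<Sum>i<g. cnj (B i) * Bc i Q)" for Q
  have L\<zeta>: "\<forall>v\<in>verts S. LV S (\<lambda>_. 0) \<zeta> v = 0"
  proof
    fix v assume v: "v \<in> verts S"
    have "LV S (\<lambda>_. 0) \<zeta> v = LV S (\<lambda>_. 0) (\<lambda>Q. cnj (\<kappa> Q)) v - (\<Sum>i<g. cnj (B i) * LV S (\<lambda>_. 0) (Bc i) v)"
      unfolding \<zeta>_def by (rule LV_lin)
    also have "\<dots> = 0"
    proof -
      have "(\<Sum>i<g. cnj (B i) * LV S (\<lambda>_. 0) (Bc i) v) = 0"
        by (intro sum.neutral ballI) (simp add: Bcount_closed_all[OF cp(1)] Bc_def[abs_def])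
      then show ?thesis using L\<kappa> v by (simp add: LV_cnj)
    qed
    finally show "LV S (\<lambda>_. 0) \<zeta> v = 0" .
  qed
  have PF\<zeta>: "PF S (\<lambda>_. 0) \<zeta> d = cnj (PF S (\<lambda>_. 0) \<kappa> d) - (\<Sum>i<g. cnj (B i) * PF S (\<lambda>_. 0) (Bc i) d)" for d
    unfolding \<zeta>_def PF_lin PF_cnj ..
  have \<zeta>\<alpha>: "PF S (\<lambda>_. 0) \<zeta> (pchain (\<alpha> j)) = 0" if j: "j < g" for j
    using A j int(1)[OF _ j] unfolding PF\<zeta> Bc_def PF_intersection \<kappa>_def by simp
  have \<zeta>\<beta>: "PF S (\<lambda>_. 0) \<zeta> (pchain (\<beta> j)) = 0" if j: "j < g" for j
  proof -
    have "(\<Sum>i<g. cnj (B i) * PF S (\<lambda>_. 0) (Bc i) (pchain (\<beta> j))) = (\<Sum>i<g. if i = j then cnj (B i) else 0)"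
      using int(2)[OF _ j] unfolding Bc_def PF_intersection by (intro sum.cong refl) simp
    also have "\<dots> = cnj (B j)" using j by simp
    finally show ?thesis unfolding PF\<zeta> B_def by simp
  qed
  have Z: "\<forall>c. closed_Xpath S c \<longrightarrow> PF S (\<lambda>_. 0) \<zeta> (pchain c) = 0"
  proof (intro allI impI)
    fix c assume c: "closed_Xpath S c"
    then obtain m n where h: "homologous S (pchain c) (\<lambda>e. \<Sum>i<g. m i * pchain (\<alpha> i) e + n i * pchain (\<beta> i) e)"
      using SB unfolding symplectic_basis_def by blast
    have "PF S (\<lambda>_. 0) \<zeta> (pchain c) = PF S (\<lambda>_. 0) \<zeta> (\<lambda>e. \<Sum>i<g. m i * pchain (\<alpha> i) e + n i * pchain (\<beta> i) e)"
      by (rule Pair_hom[OF h L\<zeta>])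
    also have "\<dots> = (\<Sum>i<g. of_int (m i) * PF S (\<lambda>_. 0) \<zeta> (pchain (\<alpha> i)) + of_int (n i) * PF S (\<lambda>_. 0) \<zeta> (pchain (\<beta> i)))"
      by (simp add: Pair_sum Pair_add Pair_smult)
    also have "\<dots> = 0" using \<zeta>\<alpha> \<zeta>\<beta> by simp
    finally show "PF S (\<lambda>_. 0) \<zeta> (pchain c) = 0" .
  qed
  have E: "(\<Sum>Q\<in>faces S. \<theta> Q * \<zeta> Q) = 0" by (rule exact_pairing[OF Z L\<theta>])
  have TB: "(\<Sum>Q\<in>faces S. \<theta> Q * Bc i Q) = 0" if "i < g" for i
    using A that unfolding Bc_def PF_Bcount[symmetric] by simp
  have sw: "(\<Sum>Q\<in>faces S. \<Sum>i<g. cnj (B i) * (\<theta> Q * Bc i Q)) = (\<Sum>i<g. cnj (B i) * (\<Sum>Q\<in>faces S. \<theta> Q * Bc i Q))"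
    unfolding sum_distrib_left by (rule sum.swap)
  have sw0: "(\<Sum>i<g. cnj (B i) * (\<Sum>Q\<in>faces S. \<theta> Q * Bc i Q)) = 0" using TB by simp
  have "(\<Sum>Q\<in>faces S. \<theta> Q * \<zeta> Q) = (\<Sum>Q\<in>faces S. \<theta> Q * cnj (\<kappa> Q)) - (\<Sum>Q\<in>faces S. \<Sum>i<g. cnj (B i) * (\<theta> Q * Bc i Q))"
    unfolding \<zeta>_def right_diff_distrib sum_subtractf sum_distrib_left by (simp add: mult.left_commute)
  then have "(\<Sum>Q\<in>faces S. \<theta> Q * \<zeta> Q) = (\<Sum>Q\<in>faces S. \<theta> Q * cnj (\<kappa> Q))"
    unfolding sw sw0 by simp
  then have S0: "(\<Sum>Q\<in>faces S. \<theta> Q * cnj (\<kappa> Q)) = 0" using E by simp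
  have "(\<Sum>Q\<in>faces S. \<theta> Q * cnj (\<kappa> Q)) = - \<i> * (\<Sum>Q\<in>faces S. cnj (rho S Q) * complex_of_real ((cmod (\<theta> Q))\<^sup>2))"
    unfolding \<kappa>_def cnj_i_mult sum_distrib_left by simp
  then have "(\<Sum>Q\<in>faces S. cnj (rho S Q) * complex_of_real ((cmod (\<theta> Q))\<^sup>2)) = 0" using S0 by simp
  then have "Re (\<Sum>Q\<in>faces S. cnj (rho S Q) * complex_of_real ((cmod (\<theta> Q))\<^sup>2)) = 0" by simp
  then have R: "(\<Sum>Q\<in>faces S. Re (rho S Q) * (cmod (\<theta> Q))\<^sup>2) = 0" by (simp add: Re_sum)
  have nn: "\<And>Q. Q \<in> faces S \<Longrightarrow> 0 \<le> Re (rho S Q) * (cmod (\<theta> Q))\<^sup>2"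
    using rho_pos by (simp add: less_imp_le)
  have z: "\<forall>Q\<in>faces S. Re (rho S Q) * (cmod (\<theta> Q))\<^sup>2 = 0"
    using sum_nonneg_eq_0_iff[OF fin_faces nn] R by simp
  show ?thesis
  proof
    fix Q assume Q: "Q \<in> faces S"
    have "Re (rho S Q) * (cmod (\<theta> Q))\<^sup>2 = 0" using z Q by blast
    then have "(cmod (\<theta> Q))\<^sup>2 = 0" using rho_pos[OF Q] by simp
    then show "\<theta> Q = 0" by simp
  qed
qed

end


context DR begin

lemma quad_edges_dedges: "x \<in> quad_edges q \<longleftrightarrow> (\<exists>a b. x = {a,b} \<and> (a,b) \<in> dedges q)"
  unfolding quad_edges_def dedges_def by auto

lemma qe_iff: "{a,b} \<in> quad_edges q \<longleftrightarrow> (a,b) \<in> dedges q \<or> (b,a) \<in> dedges q"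
  unfolding quad_edges_dedges by (auto simp: doubleton_eq_iff)

lemma dedge_not_both:
  assumes Q: "Q \<in> faces S" shows "\<not> ((a,b) \<in> dedges (quad S Q) \<and> (b,a) \<in> dedges (quad S Q))"
  using face_dist[OF Q] face_dist[OF Q, THEN not_sym] unfolding dedges_def by auto

lemma card_dedge_faces:
  assumes "(a,b) \<in> dedges (quad S Q)" "Q \<in> faces S"
  shows "card {Q\<in>faces S. (a,b) \<in> dedges (quad S Q)} = 1" "card {Q\<in>faces S. (b,a) \<in> dedges (quad S Q)} = 1"
proof -
  have "(a,b) \<in> adj_rel S" using assms by (auto simp: adj_rel_def)
  then show "card {Q\<in>faces S. (a,b) \<in> dedges (quad S Q)} = 1" "card {Q\<in>faces S. (b,a) \<in> dedges (quad S Q)} = 1"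
    using drs by (auto simp: discrete_riemann_surface_def)
qed

lemma card_faces_of_edge:
  assumes x: "x \<in> lam_edges S"
  shows "card {Q\<in>faces S. x \<in> quad_edges (quad S Q)} = 2"
proof -
  obtain Q1 where Q1: "Q1 \<in> faces S" "x \<in> quad_edges (quad S Q1)" using x unfolding lam_edges_def by blast
  obtain a b where ab: "x = {a,b}" "(a,b) \<in> dedges (quad S Q1)" using Q1(2) unfolding quad_edges_dedges by blast
  define A where "A = {Q\<in>faces S. (a,b) \<in> dedges (quad S Q)}"
  define B where "B = {Q\<in>faces S. (b,a) \<in> dedges (quad S Q)}"
  have eq: "{Q\<in>faces S. x \<in> quad_edges (quad S Q)} = A \<union> B"
    unfolding ab qe_iff A_def B_def by blast
  have disj: "A \<inter> B = {}"
    unfolding A_def B_def using dedge_not_both by blast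
  have fA: "finite A" "finite B" using fin_faces by (auto simp: A_def B_def)
  have "card (A \<union> B) = card A + card B" by (rule card_Un_disjoint[OF fA disj])
  moreover have "card A = 1" "card B = 1" unfolding A_def B_def using card_dedge_faces[OF ab(2) Q1(1)] by auto
  ultimately show ?thesis unfolding eq by simp
qed

lemma card_quad_edges: assumes Q: "Q \<in> faces S" shows "card (quad_edges (quad S Q)) = 4"
  using face_dist[OF Q] face_dist[OF Q, THEN not_sym] unfolding quad_edges_def by (simp add: card_insert_if doubleton_eq_iff)

lemma fin_lam: "finite (lam_edges S)"
  unfolding lam_edges_def using fin_faces by (auto simp: quad_edges_def)

lemma E2F: "card (lam_edges S) = 2 * card (faces S)"
proof -
  let ?P = "SIGMA Q:faces S. quad_edges (quad S Q)"
  have "card ?P = (\<Sum>Q\<in>faces S. card (quad_edges (quad S Q)))"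
    using fin_faces by (intro card_SigmaI) (auto simp: quad_edges_def)
  also have "\<dots> = 4 * card (faces S)" using card_quad_edges by simp
  finally have c1: "card ?P = 4 * card (faces S)" .
  let ?P' = "SIGMA x:lam_edges S. {Q\<in>faces S. x \<in> quad_edges (quad S Q)}"
  have "?P' = (\<lambda>(Q,x). (x,Q)) ` ?P" unfolding lam_edges_def by auto
  moreover have "inj_on (\<lambda>(Q,x). (x,Q)) ?P" by (auto simp: inj_on_def)
  ultimately have "card ?P' = card ?P" by (simp add: card_image)
  moreover have "card ?P' = (\<Sum>x\<in>lam_edges S. card {Q\<in>faces S. x \<in> quad_edges (quad S Q)})"
    using fin_lam fin_faces by (intro card_SigmaI) auto
  moreover have "\<dots> = 2 * card (lam_edges S)" using card_faces_of_edge by simp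
  ultimately show ?thesis using c1 by simp
qed

lemma euler: "int (card (verts S)) - int (card (lam_edges S)) + int (card (faces S)) = 2 - 2 * int g"
  using drs unfolding discrete_riemann_surface_def by blast

lemma LV_coef: "LV S \<theta> (\<lambda>Q. \<i> * rho S Q * \<theta> Q) v = (\<Sum>Q\<in>faces S.
   ((if wm (quad S Q) = v then 1 else 0) + (if bp (quad S Q) = v then \<i> * rho S Q else 0)
   - (if wp (quad S Q) = v then 1 else 0) - (if bm (quad S Q) = v then \<i> * rho S Q else 0)) * \<theta> Q)"
  unfolding LV_def by (rule sum.cong) (auto simp: algebra_simps)

lemma LV_sum_black: "(\<Sum>v\<in>{v\<in>verts S. blk S v}. LV S \<theta> \<kappa> v) = 0"
proof -
  have "(\<Sum>v\<in>{v\<in>verts S. blk S v}. LV S \<theta> \<kappa> v) =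
    (\<Sum>Q\<in>faces S. \<Sum>v\<in>{v\<in>verts S. blk S v}. (if wm (quad S Q) = v then \<theta> Q else 0) + (if bp (quad S Q) = v then \<kappa> Q else 0)
      - (if wp (quad S Q) = v then \<theta> Q else 0) - (if bm (quad S Q) = v then \<kappa> Q else 0))"
    unfolding LV_def by (rule sum.swap)
  also have "\<dots> = 0"
  proof (rule sum.neutral, rule ballI)
    fix Q assume Q: "Q \<in> faces S"
    have fin: "finite {v\<in>verts S. blk S v}" using fin_verts by simp
    show "(\<Sum>v\<in>{v\<in>verts S. blk S v}. (if wm (quad S Q) = v then \<theta> Q else 0) + (if bp (quad S Q) = v then \<kappa> Q else 0)
      - (if wp (quad S Q) = v then \<theta> Q else 0) - (if bm (quad S Q) = v then \<kappa> Q else 0)) = 0"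
      using face_props[OF Q] face_verts[OF Q] fin
      by (simp add: sum.distrib sum_subtractf sum.delta')
  qed
  finally show ?thesis .
qed

lemma LV_sum_white: "(\<Sum>v\<in>{v\<in>verts S. \<not> blk S v}. LV S \<theta> \<kappa> v) = 0"
proof -
  have "(\<Sum>v\<in>{v\<in>verts S. \<not> blk S v}. LV S \<theta> \<kappa> v) =
    (\<Sum>Q\<in>faces S. \<Sum>v\<in>{v\<in>verts S. \<not> blk S v}. (if wm (quad S Q) = v then \<theta> Q else 0) + (if bp (quad S Q) = v then \<kappa> Q else 0)
      - (if wp (quad S Q) = v then \<theta> Q else 0) - (if bm (quad S Q) = v then \<kappa> Q else 0))"
    unfolding LV_def by (rule sum.swap)
  also have "\<dots> = 0"
  proof (rule sum.neutral, rule ballI)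
    fix Q assume Q: "Q \<in> faces S"
    have fin: "finite {v\<in>verts S. \<not> blk S v}" using fin_verts by simp
    show "(\<Sum>v\<in>{v\<in>verts S. \<not> blk S v}. (if wm (quad S Q) = v then \<theta> Q else 0) + (if bp (quad S Q) = v then \<kappa> Q else 0)
      - (if wp (quad S Q) = v then \<theta> Q else 0) - (if bm (quad S Q) = v then \<kappa> Q else 0)) = 0"
      using face_props[OF Q] face_verts[OF Q] fin
      by (simp add: sum.distrib sum_subtractf sum.delta')
  qed
  finally show ?thesis .
qed


lemma LV_all_from_R:
  assumes Q0: "Q0 \<in> faces S"
    and R: "\<forall>v\<in>verts S - {bm (quad S Q0), wm (quad S Q0)}. LV S \<theta> \<kappa> v = 0"
  shows "\<forall>v\<in>verts S. LV S \<theta> \<kappa> v = 0"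
proof -
  let ?b0 = "bm (quad S Q0)" and ?w0 = "wm (quad S Q0)"
  have bw: "blk S ?b0" "\<not> blk S ?w0" "?b0 \<in> verts S" "?w0 \<in> verts S"
    using face_props[OF Q0] face_verts[OF Q0] by auto
  have fb: "finite {v\<in>verts S. blk S v}" "finite {v\<in>verts S. \<not> blk S v}" using fin_verts by auto
  have "0 = (\<Sum>v\<in>{v\<in>verts S. blk S v}. LV S \<theta> \<kappa> v)" using LV_sum_black by simp
  also have "\<dots> = LV S \<theta> \<kappa> ?b0 + (\<Sum>v\<in>{v\<in>verts S. blk S v} - {?b0}. LV S \<theta> \<kappa> v)"
    using bw fb by (simp add: sum.remove)
  also have "(\<Sum>v\<in>{v\<in>verts S. blk S v} - {?b0}. LV S \<theta> \<kappa> v) = 0"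
    using R bw by (intro sum.neutral) auto
  finally have b0: "LV S \<theta> \<kappa> ?b0 = 0" by simp
  have "0 = (\<Sum>v\<in>{v\<in>verts S. \<not> blk S v}. LV S \<theta> \<kappa> v)" using LV_sum_white by simp
  also have "\<dots> = LV S \<theta> \<kappa> ?w0 + (\<Sum>v\<in>{v\<in>verts S. \<not> blk S v} - {?w0}. LV S \<theta> \<kappa> v)"
    using bw fb by (simp add: sum.remove)
  also have "(\<Sum>v\<in>{v\<in>verts S. \<not> blk S v} - {?w0}. LV S \<theta> \<kappa> v) = 0"
    using R bw by (intro sum.neutral) auto
  finally have w0: "LV S \<theta> \<kappa> ?w0 = 0" by simp
  show ?thesis using R b0 w0 by blast
qed

lemma existence:
  assumes SB: "symplectic_basis S g \<alpha> \<beta>"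
  shows "\<exists>\<theta>. (\<forall>v\<in>verts S. LV S \<theta> (\<lambda>Q. \<i> * rho S Q * \<theta> Q) v = 0) \<and>
     (\<forall>j<g. PF S \<theta> (\<lambda>_. 0) (pchain (\<alpha> j)) = a j \<and> PF S (\<lambda>_. 0) (\<lambda>Q. \<i> * rho S Q * \<theta> Q) (pchain (\<alpha> j)) = b j)"
proof -
  obtain Q0 where Q0: "Q0 \<in> faces S" using faces_ex by blast
  let ?b0 = "bm (quad S Q0)" and ?w0 = "wm (quad S Q0)"
  define R where "R = verts S - {?b0, ?w0}"
  define m where "m = card R"
  define n where "n = card (faces S)"
  have bw: "?b0 \<in> verts S" "?w0 \<in> verts S" "?b0 \<noteq> ?w0"
    using face_verts[OF Q0] face_dist[OF Q0] by auto
  have "card {?b0, ?w0} \<le> card (verts S)" using bw fin_verts by (intro card_mono) auto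
  then have c2: "2 \<le> card (verts S)" using bw by simp
  have cardR: "card (verts S) = m + 2" unfolding m_def R_def
    using bw fin_verts c2 by (simp add: card_Diff_subset)
  have nm: "n = m + 2 * g" using euler E2F cardR unfolding n_def by linarith
  obtain vr where vr: "bij_betw vr {..<m} R"
    using ex_bij_betw_nat_finite[of R] fin_verts unfolding m_def R_def by (auto simp: lessThan_atLeast0)
  obtain fe where fe: "bij_betw fe {..<n} (faces S)"
    using ex_bij_betw_nat_finite[of "faces S"] fin_faces unfolding n_def by (auto simp: lessThan_atLeast0)
  define lvc where "lvc v Q = ((if wm (quad S Q) = v then 1 else 0) + (if bp (quad S Q) = v then \<i> * rho S Q else 0)
   - (if wp (quad S Q) = v then 1 else 0) - (if bm (quad S Q) = v then \<i> * rho S Q else 0))" for v Q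
  define K where "K r Q = (if r < m then lvc (vr r) Q else if r < m + g then complex_of_int (Bcount (\<alpha> (r - m)) (quad S Q))
     else \<i> * rho S Q * complex_of_int (Wcount (\<alpha> (r - m - g)) (quad S Q)))" for r Q
  define t where "t r = (if r < m then 0 else if r < m + g then a (r - m) else b (r - m - g))" for r
  have rows: "(\<Sum>Q\<in>faces S. K r Q * \<theta> Q) = (if r < m then LV S \<theta> (\<lambda>Q. \<i> * rho S Q * \<theta> Q) (vr r)
     else if r < m + g then PF S \<theta> (\<lambda>_. 0) (pchain (\<alpha> (r - m)))
     else PF S (\<lambda>_. 0) (\<lambda>Q. \<i> * rho S Q * \<theta> Q) (pchain (\<alpha> (r - m - g))))" for \<theta> r
    unfolding K_def LV_coef PF_Bcount PF_Wcount lvc_def by (auto simp: algebra_simps)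
  have vrR: "\<forall>v\<in>R. \<exists>r<m. vr r = v" using vr unfolding bij_betw_def by auto
  have conv: "\<forall>v\<in>verts S. LV S \<theta> (\<lambda>Q. \<i> * rho S Q * \<theta> Q) v = 0"
    if "\<forall>r<m. LV S \<theta> (\<lambda>Q. \<i> * rho S Q * \<theta> Q) (vr r) = 0" for \<theta>
  proof (rule LV_all_from_R[OF Q0])
    show "\<forall>v\<in>verts S - {?b0, ?w0}. LV S \<theta> (\<lambda>Q. \<i> * rho S Q * \<theta> Q) v = 0"
      using that vrR unfolding R_def by metis
  qed
  have inj: "\<forall>Q\<in>faces S. \<theta> Q = 0" if z: "\<forall>r<n. (\<Sum>Q\<in>faces S. K r Q * \<theta> Q) = 0" for \<theta>
  proof (rule uniqueness[OF SB])
    have "\<forall>r<m. LV S \<theta> (\<lambda>Q. \<i> * rho S Q * \<theta> Q) (vr r) = 0"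
    proof (intro allI impI)
      fix r assume "r < m" then show "LV S \<theta> (\<lambda>Q. \<i> * rho S Q * \<theta> Q) (vr r) = 0"
        using z[rule_format, of r] nm rows[of r \<theta>] by simp
    qed
    then show "\<forall>v\<in>verts S. LV S \<theta> (\<lambda>Q. \<i> * rho S Q * \<theta> Q) v = 0" by (rule conv)
    show "\<forall>j<g. PF S \<theta> (\<lambda>_. 0) (pchain (\<alpha> j)) = 0 \<and> PF S (\<lambda>_. 0) (\<lambda>Q. \<i> * rho S Q * \<theta> Q) (pchain (\<alpha> j)) = 0"
    proof (intro allI impI conjI)
      fix j assume j: "j < g"
      show "PF S \<theta> (\<lambda>_. 0) (pchain (\<alpha> j)) = 0"
        using z[rule_format, of "m + j"] nm j rows[of "m + j" \<theta>] by simp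
      show "PF S (\<lambda>_. 0) (\<lambda>Q. \<i> * rho S Q * \<theta> Q) (pchain (\<alpha> j)) = 0"
        using z[rule_format, of "m + g + j"] nm j rows[of "m + g + j" \<theta>] by simp
    qed
  qed
  obtain \<theta> where th: "\<forall>r<n. (\<Sum>Q\<in>faces S. K r Q * \<theta> Q) = t r"
    using square_surj[OF fe, of K t] inj by blast
  show ?thesis
  proof (intro exI conjI)
    have "\<forall>r<m. LV S \<theta> (\<lambda>Q. \<i> * rho S Q * \<theta> Q) (vr r) = 0"
    proof (intro allI impI)
      fix r assume "r < m" then show "LV S \<theta> (\<lambda>Q. \<i> * rho S Q * \<theta> Q) (vr r) = 0"
        using th[rule_format, of r] nm rows[of r \<theta>] by (simp add: t_def)
    qed
    then show "\<forall>v\<in>verts S. LV S \<theta> (\<lambda>Q. \<i> * rho S Q * \<theta> Q) v = 0" by (rule conv)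
    show "\<forall>j<g. PF S \<theta> (\<lambda>_. 0) (pchain (\<alpha> j)) = a j \<and> PF S (\<lambda>_. 0) (\<lambda>Q. \<i> * rho S Q * \<theta> Q) (pchain (\<alpha> j)) = b j"
    proof (intro allI impI conjI)
      fix j assume j: "j < g"
      show "PF S \<theta> (\<lambda>_. 0) (pchain (\<alpha> j)) = a j"
        using th[rule_format, of "m + j"] nm j rows[of "m + j" \<theta>] by (simp add: t_def)
      show "PF S (\<lambda>_. 0) (\<lambda>Q. \<i> * rho S Q * \<theta> Q) (pchain (\<alpha> j)) = b j"
        using th[rule_format, of "m + g + j"] nm j rows[of "m + g + j" \<theta>] by (simp add: t_def)
    qed
  qed
qed

end


definition tX :: "('v \<Rightarrow> 'v) \<Rightarrow> 'v set \<times> 'v set \<Rightarrow> 'v set \<times> 'v set" where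
  "tX \<tau> e = (\<tau> ` fst e, \<tau> ` snd e)"

lemma rot4: "rotate n [a,b,c,d] = [a,b,c,d] \<or> rotate n [a,b,c,d] = [b,c,d,a] \<or>
   rotate n [a,b,c,d] = [c,d,a,b] \<or> rotate n [a,b,c,d] = [d,a,b,c]"
proof -
  have r: "rotate n [a,b,c,d] = rotate (n mod 4) [a,b,c,d]" by (subst rotate_conv_mod) simp
  have "n mod 4 = 0 \<or> n mod 4 = Suc 0 \<or> n mod 4 = Suc (Suc 0) \<or> n mod 4 = Suc (Suc (Suc 0))" by arith
  then show ?thesis unfolding r by (elim disjE) (simp_all add: rotate_Suc)
qed

lemma tX_xe: "tX \<tau> (xe (u,v,w)) = xe (\<tau> u, \<tau> v, \<tau> w)" by (simp add: tX_def xe_def)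
lemma tX_rv: "tX \<tau> (rv e) = rv (tX \<tau> e)" by (simp add: tX_def rv_def)

locale DRT = DR +
  fixes \<tau> :: "'a \<Rightarrow> 'a"
  assumes anti: "antihol_base S \<tau>"
begin

lemma tau_verts: "v \<in> verts S \<Longrightarrow> \<tau> v \<in> verts S \<and> \<tau> (\<tau> v) = v"
  using anti unfolding antihol_base_def by blast

lemma tau_inj: "u \<in> verts S \<Longrightarrow> v \<in> verts S \<Longrightarrow> \<tau> u = \<tau> v \<Longrightarrow> u = v"
  using tau_verts by metis

definition img_rel :: "'b \<Rightarrow> 'b \<Rightarrow> bool" where
  "img_rel Q Q' \<longleftrightarrow>
    (bm (quad S Q') = \<tau> (wp (quad S Q)) \<and> wm (quad S Q') = \<tau> (bp (quad S Q)) \<and> bp (quad S Q') = \<tau> (wm (quad S Q)) \<and> wp (quad S Q') = \<tau> (bm (quad S Q))) \<or>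
    (wm (quad S Q') = \<tau> (wp (quad S Q)) \<and> bp (quad S Q') = \<tau> (bp (quad S Q)) \<and> wp (quad S Q') = \<tau> (wm (quad S Q)) \<and> bm (quad S Q') = \<tau> (bm (quad S Q))) \<or>
    (bp (quad S Q') = \<tau> (wp (quad S Q)) \<and> wp (quad S Q') = \<tau> (bp (quad S Q)) \<and> bm (quad S Q') = \<tau> (wm (quad S Q)) \<and> wm (quad S Q') = \<tau> (bm (quad S Q))) \<or>
    (wp (quad S Q') = \<tau> (wp (quad S Q)) \<and> bm (quad S Q') = \<tau> (bp (quad S Q)) \<and> wm (quad S Q') = \<tau> (wm (quad S Q)) \<and> bp (quad S Q') = \<tau> (bm (quad S Q)))"

lemma img_ex: "Q \<in> faces S \<Longrightarrow> \<exists>Q'\<in>faces S. img_rel Q Q'"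
proof -
  assume Q: "Q \<in> faces S"
  then obtain Q' n where Q': "Q' \<in> faces S" and r: "rotate n (cyc (quad S Q')) = rev (map \<tau> (cyc (quad S Q)))"
    using anti unfolding antihol_base_def by blast
  have r': "rotate n [bm (quad S Q'), wm (quad S Q'), bp (quad S Q'), wp (quad S Q')] =
     [\<tau> (wp (quad S Q)), \<tau> (bp (quad S Q)), \<tau> (wm (quad S Q)), \<tau> (bm (quad S Q))]"
    using r by (simp add: cyc_def)
  have "img_rel Q Q'"
    using rot4[of n "bm (quad S Q')" "wm (quad S Q')" "bp (quad S Q')" "wp (quad S Q')"]
  proof (elim disjE)
    assume h: "rotate n [bm (quad S Q'), wm (quad S Q'), bp (quad S Q'), wp (quad S Q')] = [bm (quad S Q'), wm (quad S Q'), bp (quad S Q'), wp (quad S Q')]"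
    show ?thesis using r' unfolding h img_rel_def by simp
  next
    assume h: "rotate n [bm (quad S Q'), wm (quad S Q'), bp (quad S Q'), wp (quad S Q')] = [wm (quad S Q'), bp (quad S Q'), wp (quad S Q'), bm (quad S Q')]"
    show ?thesis using r' unfolding h img_rel_def by simp
  next
    assume h: "rotate n [bm (quad S Q'), wm (quad S Q'), bp (quad S Q'), wp (quad S Q')] = [bp (quad S Q'), wp (quad S Q'), bm (quad S Q'), wm (quad S Q')]"
    show ?thesis using r' unfolding h img_rel_def by simp
  next
    assume h: "rotate n [bm (quad S Q'), wm (quad S Q'), bp (quad S Q'), wp (quad S Q')] = [wp (quad S Q'), bm (quad S Q'), wm (quad S Q'), bp (quad S Q')]"
    show ?thesis using r' unfolding h img_rel_def by simp
  qed
  then show ?thesis using Q' by blast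
qed

lemma img_triples:
  assumes "img_rel Q Q'" "(u,v,w) \<in> triples (quad S Q)"
  shows "(\<tau> w, \<tau> v, \<tau> u) \<in> triples (quad S Q')"
proof -
  have c: "(u,v,w) = T1 (quad S Q) \<or> (u,v,w) = T2 (quad S Q) \<or> (u,v,w) = T3 (quad S Q) \<or> (u,v,w) = T4 (quad S Q)"
    using assms(2) by (simp add: triples_eq)
  show ?thesis using assms(1) c unfolding img_rel_def triples_eq
    by (elim disjE conjE; simp only: T1_def T2_def T3_def T4_def prod.inject; elim conjE; hypsubst; simp)
qed

lemma img_qverts:
  assumes "img_rel Q Q'"
  shows "qverts (quad S Q') = \<tau> ` qverts (quad S Q)"
  using assms unfolding img_rel_def qverts_def cyc_def
  by (elim disjE conjE; simp only: list.set image_insert image_empty; blast)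

lemma Xedge_sub: "e \<in> Xedges S \<Longrightarrow> fst e \<subseteq> verts S \<and> snd e \<subseteq> verts S"
  unfolding Xedges_iff using face_verts by (auto simp: triples_eq xe_def rv_def T1_def T2_def T3_def T4_def)

lemma tX_Xedges: assumes e: "e \<in> Xedges S" shows "tX \<tau> e \<in> Xedges S"
proof -
  obtain Q t where Q: "Q \<in> faces S" and t: "t \<in> triples (quad S Q)" and et: "e = xe t \<or> e = rv (xe t)"
    using e Xedges_iff by blast
  obtain u v w where tt: "t = (u,v,w)" by (cases t) auto
  obtain Q' where Q': "Q' \<in> faces S" "img_rel Q Q'" using img_ex[OF Q] by blast
  have t': "(\<tau> w, \<tau> v, \<tau> u) \<in> triples (quad S Q')" using img_triples[OF Q'(2)] t tt by simp
  have "tX \<tau> (xe t) = rv (xe (\<tau> w, \<tau> v, \<tau> u))" using tt by (simp add: tX_xe rv_xe)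
  then show ?thesis using et xe_in_Xedges[OF Q'(1) t'] by (auto simp: tX_rv)
qed

lemma tX_tX: "e \<in> Xedges S \<Longrightarrow> tX \<tau> (tX \<tau> e) = e"
proof -
  assume e: "e \<in> Xedges S"
  have "\<tau> ` \<tau> ` A = A" if "A \<subseteq> verts S" for A
    using that tau_verts by (force simp: image_image)
  then show ?thesis using Xedge_sub[OF e] by (simp add: tX_def)
qed

end


definition etaf :: "('v,'f) drs \<Rightarrow> ('v \<Rightarrow> 'v) \<Rightarrow> ('v set \<times> 'v set \<Rightarrow> complex) \<Rightarrow> 'v set \<times> 'v set \<Rightarrow> complex" where
  "etaf S \<tau> \<omega> e = (if e \<in> Xedges S then cnj (\<omega> (tX \<tau> e)) else 0)"

lemma cnj_sum_list: "cnj (sum_list xs) = sum_list (map cnj xs)"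
  by (induction xs) auto

context DR begin

lemma local_omF:
  assumes of: "one_form S \<omega>"
    and loc: "\<forall>Q\<in>faces S. \<exists>f. disc_holomorphic_on (rho S Q) (quad S Q) f \<and>
        (\<forall>(u, v, w)\<in>triples (quad S Q). \<omega> ({u, v}, {v, w}) = (f w - f u) / 2)"
  defines "\<theta> \<equiv> \<lambda>Q. \<omega> (xe (T1 (quad S Q)))"
  shows "\<omega> = omF S \<theta> (\<lambda>Q. \<i> * rho S Q * \<theta> Q)"
proof -
  let ?\<kappa> = "\<lambda>Q. \<i> * rho S Q * \<theta> Q"
  have onxe: "\<omega> (xe t) = omF S \<theta> ?\<kappa> (xe t)" if Q: "Q \<in> faces S" and t: "t \<in> triples (quad S Q)" for Q t
  proof -
    obtain f where hol: "disc_holomorphic_on (rho S Q) (quad S Q) f"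
      and df: "\<forall>(u, v, w)\<in>triples (quad S Q). \<omega> ({u, v}, {v, w}) = (f w - f u) / 2"
      using loc Q by blast
    have df': "\<omega> (xe s) = (f (snd (snd s)) - f (fst s)) / 2" if "s \<in> triples (quad S Q)" for s
      using df that by (cases s) (auto simp: xe_def)
    note d1 = df'[OF T_in(1)] and d2 = df'[OF T_in(2)] and d3 = df'[OF T_in(3)] and d4 = df'[OF T_in(4)]
    have th: "\<theta> Q = (f (bp (quad S Q)) - f (bm (quad S Q))) / 2"
      using d1 by (simp add: \<theta>_def T1_def)
    have h: "f (wp (quad S Q)) - f (wm (quad S Q)) = \<i> * rho S Q * (f (bp (quad S Q)) - f (bm (quad S Q)))"
      using hol by (simp add: disc_holomorphic_on_def)
    have e1: "\<omega> (xe (T1 (quad S Q))) = \<theta> Q" by (simp add: \<theta>_def)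
    have e2: "\<omega> (xe (T2 (quad S Q))) = ?\<kappa> Q"
    proof -
      have "\<omega> (xe (T2 (quad S Q))) = (f (wp (quad S Q)) - f (wm (quad S Q))) / 2" using d2 by (simp add: T2_def)
      also have "\<dots> = \<i> * rho S Q * ((f (bp (quad S Q)) - f (bm (quad S Q))) / 2)" using h by simp
      finally show ?thesis unfolding th .
    qed
    have e3: "\<omega> (xe (T3 (quad S Q))) = - \<theta> Q"
    proof -
      have "\<omega> (xe (T3 (quad S Q))) = (f (bm (quad S Q)) - f (bp (quad S Q))) / 2" using d3 by (simp add: T3_def)
      also have "\<dots> = - ((f (bp (quad S Q)) - f (bm (quad S Q))) / 2)" by (simp add: field_simps)
      finally show ?thesis unfolding th .
    qed
    have e4: "\<omega> (xe (T4 (quad S Q))) = - ?\<kappa> Q"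
    proof -
      have "\<omega> (xe (T4 (quad S Q))) = (f (wm (quad S Q)) - f (wp (quad S Q))) / 2" using d4 by (simp add: T4_def)
      also have "\<dots> = - ((f (wp (quad S Q)) - f (wm (quad S Q))) / 2)" by (simp add: field_simps)
      also have "\<dots> = - (\<i> * rho S Q * ((f (bp (quad S Q)) - f (bm (quad S Q))) / 2))" using h by simp
      finally show ?thesis unfolding th .
    qed
    have "t = T1 (quad S Q) \<or> t = T2 (quad S Q) \<or> t = T3 (quad S Q) \<or> t = T4 (quad S Q)"
      using t by (simp add: triples_eq)
    then have "\<omega> (xe t) = val (quad S Q) (\<theta> Q) (?\<kappa> Q) t"
      using T_dist[OF Q] e1 e2 e3 e4 unfolding val_def by (elim disjE) (simp_all add: eq_commute)
    then show ?thesis using omF_xe[OF Q t] by simp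
  qed
  show eq: "\<omega> = omF S \<theta> ?\<kappa>"
  proof
    fix e
    show "\<omega> e = omF S \<theta> ?\<kappa> e"
    proof (cases "e \<in> Xedges S")
      case True
      then obtain Q t where Q: "Q \<in> faces S" and t: "t \<in> triples (quad S Q)"
        and e: "e = xe t \<or> e = rv (xe t)" using Xedges_iff by blast
      show ?thesis
      proof (cases "e = xe t")
        case True then show ?thesis using onxe[OF Q t] by simp
      next
        case False
        then have e: "e = rv (xe t)" using e by blast
        have "\<omega> e = - \<omega> (xe t)" using of xe_in_Xedges[OF Q t] unfolding one_form_def e rv_def by auto
        then show ?thesis using onxe[OF Q t] e by (simp add: omF_rv)
      qed
    next
      case False
      have "\<omega> e = 0" using of False unfolding one_form_def by blast
      moreover have "omF S \<theta> ?\<kappa> e = 0" using omF_one_form[of \<theta> ?\<kappa>] False unfolding one_form_def by blast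
      ultimately show ?thesis by simp
    qed
  qed
qed

lemma holo_from_local:
  assumes of: "one_form S \<omega>"
    and loc: "\<forall>Q\<in>faces S. \<exists>f. disc_holomorphic_on (rho S Q) (quad S Q) f \<and>
        (\<forall>(u, v, w)\<in>triples (quad S Q). \<omega> ({u, v}, {v, w}) = (f w - f u) / 2)"
    and cl: "\<forall>v\<in>verts S. (\<Sum>e\<in>Fv_edges S v. \<omega> e) = 0"
  shows "holo_diff S \<omega>"
proof -
  define \<theta> where "\<theta> = (\<lambda>Q. \<omega> (xe (T1 (quad S Q))))"
  have eq: "\<omega> = omF S \<theta> (\<lambda>Q. \<i> * rho S Q * \<theta> Q)" unfolding \<theta>_def by (rule local_omF[OF of loc])
  have "\<forall>v\<in>verts S. LV S \<theta> (\<lambda>Q. \<i> * rho S Q * \<theta> Q) v = 0"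
    using cl unfolding eq sum_omF_Fv by blast
  then show ?thesis unfolding eq by (rule omF_holo)
qed

end

context DRT begin

lemma holo_one_form: "holo_diff S \<omega> \<Longrightarrow> one_form S \<omega>" by (simp add: holo_diff_def)

lemma eta_one_form:
  assumes of: "one_form S \<omega>"
  shows "one_form S (etaf S \<tau> \<omega>)"
  unfolding one_form_def
proof (intro conjI allI impI ballI)
  fix e assume "e \<notin> Xedges S" then show "etaf S \<tau> \<omega> e = 0" by (simp add: etaf_def)
next
  fix e assume e: "e \<in> Xedges S"
  have r: "(snd e, fst e) \<in> Xedges S" using Xedges_rv[OF e] by (simp add: rv_def)
  have "tX \<tau> (snd e, fst e) = rv (tX \<tau> e)" by (simp add: tX_def rv_def)
  moreover have "\<omega> (rv (tX \<tau> e)) = - \<omega> (tX \<tau> e)"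
    using of tX_Xedges[OF e] unfolding one_form_def rv_def by auto
  ultimately show "etaf S \<tau> \<omega> (snd e, fst e) = - etaf S \<tau> \<omega> e"
    using e r by (simp add: etaf_def)
qed

lemma triple_verts: "Q \<in> faces S \<Longrightarrow> (u,v,w) \<in> triples (quad S Q) \<Longrightarrow> u \<in> verts S \<and> v \<in> verts S \<and> w \<in> verts S"
  using face_verts by (auto simp: triples_def)

lemma eta_formula:
  assumes of: "one_form S \<omega>" and Q: "Q \<in> faces S" and Q': "Q' \<in> faces S" "img_rel Q Q'"
    and f: "\<forall>(u, v, w)\<in>triples (quad S Q'). \<omega> ({u, v}, {v, w}) = (f w - f u) / 2"
    and t: "(u,v,w) \<in> triples (quad S Q)"
  shows "etaf S \<tau> \<omega> ({u, v}, {v, w}) = (cnj (f (\<tau> w)) - cnj (f (\<tau> u))) / 2"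
proof -
  have t': "(\<tau> w, \<tau> v, \<tau> u) \<in> triples (quad S Q')" using img_triples[OF Q'(2) t] .
  have x: "({u, v}, {v, w}) = xe (u,v,w)" by (simp add: xe_def)
  have inX: "xe (u,v,w) \<in> Xedges S" using xe_in_Xedges[OF Q t] by simp
  have inX': "xe (\<tau> w, \<tau> v, \<tau> u) \<in> Xedges S" using xe_in_Xedges[OF Q'(1) t'] by simp
  have "tX \<tau> (xe (u,v,w)) = rv (xe (\<tau> w, \<tau> v, \<tau> u))" by (simp add: tX_xe rv_xe)
  then have "\<omega> (tX \<tau> (xe (u,v,w))) = - \<omega> (xe (\<tau> w, \<tau> v, \<tau> u))"
    using of inX' unfolding one_form_def by (simp add: rv_def)
  also have "\<omega> (xe (\<tau> w, \<tau> v, \<tau> u)) = (f (\<tau> u) - f (\<tau> w)) / 2"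
    using f t' by (auto simp: xe_def)
  finally have w: "\<omega> (tX \<tau> (xe (u,v,w))) = - ((f (\<tau> u) - f (\<tau> w)) / 2)" .
  have "cnj (\<omega> (tX \<tau> (xe (u,v,w)))) = cnj (- ((f (\<tau> u) - f (\<tau> w)) / 2))" using w by simp
  also have "\<dots> = (cnj (f (\<tau> w)) - cnj (f (\<tau> u))) / 2" by (simp add: field_simps)
  finally show ?thesis unfolding x etaf_def using inX by simp
qed

end

lemma alg1: "a - b = \<i> * cnj r * (c - d) \<Longrightarrow> cnj b - cnj a = \<i> * r * (cnj c - cnj d)"
proof -
  assume h: "a - b = \<i> * cnj r * (c - d)"
  have "cnj (a - b) = cnj (\<i> * cnj r * (c - d))" using h by simp
  then have "cnj a - cnj b = - (\<i> * r * (cnj c - cnj d))" by simp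
  then show ?thesis by (simp add: algebra_simps)
qed

lemma alg2: "r \<noteq> 0 \<Longrightarrow> a - b = \<i> * (1 / cnj r) * (c - d) \<Longrightarrow> cnj d - cnj c = \<i> * r * (cnj b - cnj a)"
proof -
  assume r: "r \<noteq> 0" and h: "a - b = \<i> * (1 / cnj r) * (c - d)"
  have "cnj (a - b) = cnj (\<i> * (1 / cnj r) * (c - d))" using h by simp
  then have "cnj a - cnj b = - (\<i> * (cnj c - cnj d) / r)" by simp
  then have "r * (cnj a - cnj b) = - (\<i> * (cnj c - cnj d))" using r by (simp add: field_simps)
  then have "\<i> * (r * (cnj a - cnj b)) = \<i> * (- (\<i> * (cnj c - cnj d)))" by simp
  then have "\<i> * r * (cnj a - cnj b) = cnj c - cnj d" by (simp add: algebra_simps)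
  then show ?thesis by (simp add: algebra_simps)
qed

context DRT begin

lemma hol_transfer:
  assumes T: "is_type1 S \<tau> \<or> is_type2 S \<tau>" and Q: "Q \<in> faces S" and Q': "Q' \<in> faces S" "img_rel Q Q'"
    and hol: "disc_holomorphic_on (rho S Q') (quad S Q') f"
  shows "disc_holomorphic_on (rho S Q) (quad S Q) (\<lambda>x. cnj (f (\<tau> x)))"
proof -
  have qv: "qverts (quad S Q') = \<tau> ` qverts (quad S Q)" by (rule img_qverts[OF Q'(2)])
  have H: "f (wp (quad S Q')) - f (wm (quad S Q')) = \<i> * rho S Q' * (f (bp (quad S Q')) - f (bm (quad S Q')))"
    using hol by (simp add: disc_holomorphic_on_def)
  note fp = face_props[OF Q] and fp' = face_props[OF Q'(1)] and fv = face_verts[OF Q]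
  show ?thesis using T
  proof
    assume T1: "is_type1 S \<tau>"
    have rho: "rho S Q' = cnj (rho S Q)" using T1 Q Q' qv unfolding is_type1_def by blast
    have col: "blk S (\<tau> x) = blk S x" if "x \<in> verts S" for x using T1 that unfolding is_type1_def by blast
    have c: "(wm (quad S Q') = \<tau> (wp (quad S Q)) \<and> bp (quad S Q') = \<tau> (bp (quad S Q)) \<and> wp (quad S Q') = \<tau> (wm (quad S Q)) \<and> bm (quad S Q') = \<tau> (bm (quad S Q))) \<or>
    (wp (quad S Q') = \<tau> (wp (quad S Q)) \<and> bm (quad S Q') = \<tau> (bp (quad S Q)) \<and> wm (quad S Q') = \<tau> (wm (quad S Q)) \<and> bp (quad S Q') = \<tau> (bm (quad S Q)))"
      using Q'(2) fp fp' col[OF fv(4)] unfolding img_rel_def by force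
    then show ?thesis
    proof
      assume c1: "wm (quad S Q') = \<tau> (wp (quad S Q)) \<and> bp (quad S Q') = \<tau> (bp (quad S Q)) \<and> wp (quad S Q') = \<tau> (wm (quad S Q)) \<and> bm (quad S Q') = \<tau> (bm (quad S Q))"
      have "f (\<tau> (wm (quad S Q))) - f (\<tau> (wp (quad S Q))) = \<i> * cnj (rho S Q) * (f (\<tau> (bp (quad S Q))) - f (\<tau> (bm (quad S Q))))"
        using H c1 rho by simp
      from alg1[OF this] show ?thesis by (simp add: disc_holomorphic_on_def)
    next
      assume c3: "wp (quad S Q') = \<tau> (wp (quad S Q)) \<and> bm (quad S Q') = \<tau> (bp (quad S Q)) \<and> wm (quad S Q') = \<tau> (wm (quad S Q)) \<and> bp (quad S Q') = \<tau> (bm (quad S Q))"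
      have "f (\<tau> (wp (quad S Q))) - f (\<tau> (wm (quad S Q))) = \<i> * cnj (rho S Q) * (f (\<tau> (bm (quad S Q))) - f (\<tau> (bp (quad S Q))))"
        using H c3 rho by simp
      from alg1[OF this] show ?thesis by (simp add: disc_holomorphic_on_def algebra_simps)
    qed
  next
    assume T2: "is_type2 S \<tau>"
    have rho: "rho S Q' = 1 / cnj (rho S Q)" using T2 Q Q' qv unfolding is_type2_def by blast
    have r0: "rho S Q \<noteq> 0" using rho_pos[OF Q] by auto
    have col: "blk S (\<tau> x) \<noteq> blk S x" if "x \<in> verts S" for x using T2 that unfolding is_type2_def by blast
    have c: "(bm (quad S Q') = \<tau> (wp (quad S Q)) \<and> wm (quad S Q') = \<tau> (bp (quad S Q)) \<and> bp (quad S Q') = \<tau> (wm (quad S Q)) \<and> wp (quad S Q') = \<tau> (bm (quad S Q))) \<or>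
    (bp (quad S Q') = \<tau> (wp (quad S Q)) \<and> wp (quad S Q') = \<tau> (bp (quad S Q)) \<and> bm (quad S Q') = \<tau> (wm (quad S Q)) \<and> wm (quad S Q') = \<tau> (bm (quad S Q)))"
      using Q'(2) fp fp' col[OF fv(1)] unfolding img_rel_def by force
    then show ?thesis
    proof
      assume c0: "bm (quad S Q') = \<tau> (wp (quad S Q)) \<and> wm (quad S Q') = \<tau> (bp (quad S Q)) \<and> bp (quad S Q') = \<tau> (wm (quad S Q)) \<and> wp (quad S Q') = \<tau> (bm (quad S Q))"
      have "f (\<tau> (bm (quad S Q))) - f (\<tau> (bp (quad S Q))) = \<i> * (1 / cnj (rho S Q)) * (f (\<tau> (wm (quad S Q))) - f (\<tau> (wp (quad S Q))))"
        using H c0 rho by simp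
      from alg2[OF r0 this] show ?thesis by (simp add: disc_holomorphic_on_def)
    next
      assume c2: "bp (quad S Q') = \<tau> (wp (quad S Q)) \<and> wp (quad S Q') = \<tau> (bp (quad S Q)) \<and> bm (quad S Q') = \<tau> (wm (quad S Q)) \<and> wm (quad S Q') = \<tau> (bm (quad S Q))"
      have "f (\<tau> (bp (quad S Q))) - f (\<tau> (bm (quad S Q))) = \<i> * (1 / cnj (rho S Q)) * (f (\<tau> (wp (quad S Q))) - f (\<tau> (wm (quad S Q))))"
        using H c2 rho by simp
      from alg2[OF r0 this] show ?thesis by (simp add: disc_holomorphic_on_def algebra_simps)
    qed
  qed
qed

end


context DRT begin

lemma Fv_sub_X: "e \<in> Fv_edges S v \<Longrightarrow> e \<in> Xedges S"
  unfolding Fv_edges_eq using xe_in_Xedges by auto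

lemma Fv_map:
  assumes e: "e \<in> Fv_edges S v" and v: "v \<in> verts S"
  shows "rv (tX \<tau> e) \<in> Fv_edges S (\<tau> v)"
proof -
  obtain Q p s where Q: "Q \<in> faces S" and t: "(p, v, s) \<in> triples (quad S Q)" and ee: "e = xe (p, v, s)"
    using e unfolding Fv_edges_def xe_def by auto
  obtain Q' where Q': "Q' \<in> faces S" "img_rel Q Q'" using img_ex[OF Q] by blast
  have t': "(\<tau> s, \<tau> v, \<tau> p) \<in> triples (quad S Q')" using img_triples[OF Q'(2) t] .
  have "rv (tX \<tau> e) = xe (\<tau> s, \<tau> v, \<tau> p)" unfolding ee tX_xe rv_xe ..
  then show ?thesis unfolding Fv_edges_def xe_def using Q'(1) t' by auto
qed

lemma Fv_bij:
  assumes v: "v \<in> verts S"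
  shows "bij_betw (\<lambda>e. rv (tX \<tau> e)) (Fv_edges S v) (Fv_edges S (\<tau> v))"
proof (rule bij_betw_byWitness[where f' = "\<lambda>e. rv (tX \<tau> e)"])
  have tv: "\<tau> v \<in> verts S" "\<tau> (\<tau> v) = v" using tau_verts[OF v] by auto
  show "\<forall>e\<in>Fv_edges S v. rv (tX \<tau> (rv (tX \<tau> e))) = e"
    using Fv_sub_X tX_tX by (simp add: tX_rv)
  show "\<forall>e\<in>Fv_edges S (\<tau> v). rv (tX \<tau> (rv (tX \<tau> e))) = e"
    using Fv_sub_X tX_tX by (simp add: tX_rv)
  show "(\<lambda>e. rv (tX \<tau> e)) ` Fv_edges S v \<subseteq> Fv_edges S (\<tau> v)" using Fv_map v by auto
  show "(\<lambda>e. rv (tX \<tau> e)) ` Fv_edges S (\<tau> v) \<subseteq> Fv_edges S v" using Fv_map[of _ "\<tau> v"] tv by auto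
qed

lemma eta_Fv:
  assumes H: "holo_diff S \<omega>" and v: "v \<in> verts S"
  shows "(\<Sum>e\<in>Fv_edges S v. etaf S \<tau> \<omega> e) = 0"
proof -
  have of: "one_form S \<omega>" using H by (simp add: holo_diff_def)
  have cl: "(\<Sum>e\<in>Fv_edges S (\<tau> v). \<omega> e) = 0"
    using H tau_verts[OF v] unfolding holo_diff_def closed_form_def by blast
  have "(\<Sum>e\<in>Fv_edges S v. etaf S \<tau> \<omega> e) = (\<Sum>e\<in>Fv_edges S v. - cnj (\<omega> (rv (tX \<tau> e))))"
  proof (rule sum.cong[OF refl])
    fix e assume e: "e \<in> Fv_edges S v"
    have eX: "e \<in> Xedges S" using Fv_sub_X[OF e] .
    have "\<omega> (rv (tX \<tau> e)) = - \<omega> (tX \<tau> e)" using of tX_Xedges[OF eX] unfolding one_form_def rv_def by auto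
    then show "etaf S \<tau> \<omega> e = - cnj (\<omega> (rv (tX \<tau> e)))" using eX by (simp add: etaf_def)
  qed
  also have "\<dots> = - cnj (\<Sum>e\<in>Fv_edges S v. \<omega> (rv (tX \<tau> e)))" by (simp add: sum_negf cnj_sum)
  also have "(\<Sum>e\<in>Fv_edges S v. \<omega> (rv (tX \<tau> e))) = (\<Sum>e\<in>Fv_edges S (\<tau> v). \<omega> e)"
    using sum.reindex_bij_betw[OF Fv_bij[OF v], of \<omega>] by simp
  finally show ?thesis using cl by simp
qed

lemma eta_holo:
  assumes T: "is_type1 S \<tau> \<or> is_type2 S \<tau>" and H: "holo_diff S \<omega>"
  shows "holo_diff S (etaf S \<tau> \<omega>)"
proof (rule holo_from_local)
  have of: "one_form S \<omega>" using H by (simp add: holo_diff_def)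
  show "one_form S (etaf S \<tau> \<omega>)" by (rule eta_one_form[OF of])
  show "\<forall>v\<in>verts S. (\<Sum>e\<in>Fv_edges S v. etaf S \<tau> \<omega> e) = 0" using eta_Fv[OF H] by blast
  show "\<forall>Q\<in>faces S. \<exists>f. disc_holomorphic_on (rho S Q) (quad S Q) f \<and>
        (\<forall>(u, v, w)\<in>triples (quad S Q). etaf S \<tau> \<omega> ({u, v}, {v, w}) = (f w - f u) / 2)"
  proof
    fix Q assume Q: "Q \<in> faces S"
    obtain Q' where Q': "Q' \<in> faces S" "img_rel Q Q'" using img_ex[OF Q] by blast
    obtain f where hol: "disc_holomorphic_on (rho S Q') (quad S Q') f"
      and df: "\<forall>(u, v, w)\<in>triples (quad S Q'). \<omega> ({u, v}, {v, w}) = (f w - f u) / 2"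
      using H Q'(1) unfolding holo_diff_def by blast
    show "\<exists>f. disc_holomorphic_on (rho S Q) (quad S Q) f \<and>
        (\<forall>(u, v, w)\<in>triples (quad S Q). etaf S \<tau> \<omega> ({u, v}, {v, w}) = (f w - f u) / 2)"
      using hol_transfer[OF T Q Q' hol] eta_formula[OF of Q Q' df]
      by (intro exI[of _ "\<lambda>x. cnj (f (\<tau> x))"]) auto
  qed
qed

lemma pedges_tau: "pedges (tau_path \<tau> xs) = map (tX \<tau>) (pedges xs)"
  unfolding pedges_def tau_path_def by (simp add: map_tl[symmetric] zip_map_map tX_def split_def)

lemma color_tX:
  assumes e: "e \<in> Xedges S"
  shows "is_type1 S \<tau> \<Longrightarrow> black_Xe S (tX \<tau> e) = black_Xe S e"
    and "is_type2 S \<tau> \<Longrightarrow> black_Xe S (tX \<tau> e) = white_Xe S e"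
    and "is_type1 S \<tau> \<Longrightarrow> white_Xe S (tX \<tau> e) = white_Xe S e"
    and "is_type2 S \<tau> \<Longrightarrow> white_Xe S (tX \<tau> e) = black_Xe S e"
proof -
  obtain Q t where Q: "Q \<in> faces S" and t: "t \<in> triples (quad S Q)" and et: "e = xe t \<or> e = rv (xe t)"
    using e Xedges_iff by blast
  obtain u v w where tt: "t = (u,v,w)" by (cases t) auto
  have tr: "(u,v,w) \<in> triples (quad S Q)" using t tt by simp
  have d: "u \<noteq> v" "v \<noteq> w" "u \<noteq> w" using triple_dist[OF Q tr] by auto
  have vs: "u \<in> verts S" "v \<in> verts S" "w \<in> verts S" using triple_verts[OF Q tr] by auto
  have d': "\<tau> u \<noteq> \<tau> v" "\<tau> v \<noteq> \<tau> w" "\<tau> u \<noteq> \<tau> w" using d vs tau_inj by metis+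
  have base: "black_Xe S (tX \<tau> e) = black_Xe S (xe (\<tau> u, \<tau> v, \<tau> w))" "white_Xe S (tX \<tau> e) = white_Xe S (xe (\<tau> u, \<tau> v, \<tau> w))"
     "black_Xe S e = black_Xe S (xe (u,v,w))" "white_Xe S e = white_Xe S (xe (u,v,w))"
    using et tt by (auto simp: tX_rv tX_xe black_rv white_rv)
  show "is_type1 S \<tau> \<Longrightarrow> black_Xe S (tX \<tau> e) = black_Xe S e"
    "is_type1 S \<tau> \<Longrightarrow> white_Xe S (tX \<tau> e) = white_Xe S e"
    using vs unfolding base black_xe[OF d] white_xe[OF d] black_xe[OF d'] white_xe[OF d'] is_type1_def by auto
  show "is_type2 S \<tau> \<Longrightarrow> black_Xe S (tX \<tau> e) = white_Xe S e"
    "is_type2 S \<tau> \<Longrightarrow> white_Xe S (tX \<tau> e) = black_Xe S e"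
    using vs unfolding base black_xe[OF d] white_xe[OF d] black_xe[OF d'] white_xe[OF d'] is_type2_def by auto
qed

lemma per_eta:
  assumes c: "closed_Xpath S xs" and P: "\<And>e. e \<in> Xedges S \<Longrightarrow> P (tX \<tau> e) = P' e"
  shows "2 * sum_list (map (etaf S \<tau> \<omega>) (filter P' (pedges xs))) =
         cnj (2 * sum_list (map \<omega> (filter P (pedges (tau_path \<tau> xs)))))"
proof -
  have sub: "set (pedges xs) \<subseteq> Xedges S" using c by (simp add: closed_Xpath_def)
  have m: "map (etaf S \<tau> \<omega>) (filter P' (pedges xs)) = map (\<lambda>e. cnj (\<omega> (tX \<tau> e))) (filter P' (pedges xs))"
    using sub by (intro map_cong refl) (auto simp: etaf_def)
  have f: "filter P (pedges (tau_path \<tau> xs)) = map (tX \<tau>) (filter P' (pedges xs))"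
    unfolding pedges_tau filter_map comp_def using sub P by (intro arg_cong[where f="map (tX \<tau>)"] filter_cong) auto
  show ?thesis unfolding m f by (simp add: cnj_sum_list comp_def)
qed

lemma bper_eta1: "is_type1 S \<tau> \<Longrightarrow> closed_Xpath S xs \<Longrightarrow> bper S (etaf S \<tau> \<omega>) xs = cnj (bper S \<omega> (tau_path \<tau> xs))"
  unfolding bper_def by (rule per_eta) (auto simp: color_tX)
lemma wper_eta1: "is_type1 S \<tau> \<Longrightarrow> closed_Xpath S xs \<Longrightarrow> wper S (etaf S \<tau> \<omega>) xs = cnj (wper S \<omega> (tau_path \<tau> xs))"
  unfolding wper_def by (rule per_eta) (auto simp: color_tX)
lemma bper_eta2: "is_type2 S \<tau> \<Longrightarrow> closed_Xpath S xs \<Longrightarrow> bper S (etaf S \<tau> \<omega>) xs = cnj (wper S \<omega> (tau_path \<tau> xs))"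
  unfolding bper_def wper_def by (rule per_eta) (auto simp: color_tX)
lemma wper_eta2: "is_type2 S \<tau> \<Longrightarrow> closed_Xpath S xs \<Longrightarrow> wper S (etaf S \<tau> \<omega>) xs = cnj (bper S \<omega> (tau_path \<tau> xs))"
  unfolding bper_def wper_def by (rule per_eta) (auto simp: color_tX)

end


lemma LV_diff2: "LV S (\<lambda>Q. a Q - b Q) (\<lambda>Q. c Q - d Q) v = LV S a c v - LV S b d v"
  unfolding LV_def sum_subtractf[symmetric] by (rule sum.cong) auto

lemma PF_diff2: "PF S (\<lambda>Q. a Q - b Q) (\<lambda>Q. c Q - d Q) x = PF S a c x - PF S b d x"
  unfolding PF_def sum_subtractf[symmetric] by (rule sum.cong) (auto simp: algebra_simps)

lemma omF_cong: "(\<forall>Q\<in>faces S. \<theta>1 Q = \<theta>2 Q \<and> \<kappa>1 Q = \<kappa>2 Q) \<Longrightarrow> omF S \<theta>1 \<kappa>1 = omF S \<theta>2 \<kappa>2"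
  unfolding omF_def by (intro ext sum.cong) auto

context DR begin

lemma holo_unique:
  assumes SB: "symplectic_basis S g \<alpha> \<beta>" and H1: "holo_diff S \<omega>1" and H2: "holo_diff S \<omega>2"
    and P: "\<forall>j<g. bper S \<omega>1 (\<alpha> j) = bper S \<omega>2 (\<alpha> j) \<and> wper S \<omega>1 (\<alpha> j) = wper S \<omega>2 (\<alpha> j)"
  shows "\<omega>1 = \<omega>2"
proof -
  define \<theta>1 where "\<theta>1 = (\<lambda>Q. \<omega>1 (xe (T1 (quad S Q))))"
  define \<theta>2 where "\<theta>2 = (\<lambda>Q. \<omega>2 (xe (T1 (quad S Q))))"
  have e1: "\<omega>1 = omF S \<theta>1 (\<lambda>Q. \<i> * rho S Q * \<theta>1 Q)" unfolding \<theta>1_def by (rule holo_omF(1)[OF H1])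
  have l1: "\<forall>v\<in>verts S. LV S \<theta>1 (\<lambda>Q. \<i> * rho S Q * \<theta>1 Q) v = 0" unfolding \<theta>1_def by (rule holo_omF(2)[OF H1])
  have e2: "\<omega>2 = omF S \<theta>2 (\<lambda>Q. \<i> * rho S Q * \<theta>2 Q)" unfolding \<theta>2_def by (rule holo_omF(1)[OF H2])
  have l2: "\<forall>v\<in>verts S. LV S \<theta>2 (\<lambda>Q. \<i> * rho S Q * \<theta>2 Q) v = 0" unfolding \<theta>2_def by (rule holo_omF(2)[OF H2])
  define \<theta> where "\<theta> = (\<lambda>Q. \<theta>1 Q - \<theta>2 Q)"
  have k: "(\<lambda>Q. \<i> * rho S Q * \<theta> Q) = (\<lambda>Q. \<i> * rho S Q * \<theta>1 Q - \<i> * rho S Q * \<theta>2 Q)"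
    unfolding \<theta>_def by (simp add: algebra_simps)
  have z0: "(\<lambda>_. 0::complex) = (\<lambda>Q. (0::complex) - 0)" by simp
  have "\<forall>Q\<in>faces S. \<theta> Q = 0"
  proof (rule uniqueness[OF SB])
    show "\<forall>v\<in>verts S. LV S \<theta> (\<lambda>Q. \<i> * rho S Q * \<theta> Q) v = 0"
      unfolding k unfolding \<theta>_def LV_diff2 using l1 l2 by simp
    show "\<forall>j<g. PF S \<theta> (\<lambda>_. 0) (pchain (\<alpha> j)) = 0 \<and> PF S (\<lambda>_. 0) (\<lambda>Q. \<i> * rho S Q * \<theta> Q) (pchain (\<alpha> j)) = 0"
    proof (intro allI impI conjI)
      fix j assume j: "j < g"
      have "bper S \<omega>1 (\<alpha> j) = bper S \<omega>2 (\<alpha> j)" "wper S \<omega>1 (\<alpha> j) = wper S \<omega>2 (\<alpha> j)" using P j by auto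
      moreover have "bper S \<omega>1 (\<alpha> j) = 2 * PF S \<theta>1 (\<lambda>_. 0) (pchain (\<alpha> j))"
        unfolding e1 by (rule bper_omF)
      moreover have "bper S \<omega>2 (\<alpha> j) = 2 * PF S \<theta>2 (\<lambda>_. 0) (pchain (\<alpha> j))"
        unfolding e2 by (rule bper_omF)
      moreover have "wper S \<omega>1 (\<alpha> j) = 2 * PF S (\<lambda>_. 0) (\<lambda>Q. \<i> * rho S Q * \<theta>1 Q) (pchain (\<alpha> j))"
        unfolding e1 by (rule wper_omF)
      moreover have "wper S \<omega>2 (\<alpha> j) = 2 * PF S (\<lambda>_. 0) (\<lambda>Q. \<i> * rho S Q * \<theta>2 Q) (pchain (\<alpha> j))"
        unfolding e2 by (rule wper_omF)
      ultimately have b: "PF S \<theta>1 (\<lambda>_. 0) (pchain (\<alpha> j)) = PF S \<theta>2 (\<lambda>_. 0) (pchain (\<alpha> j))"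
        and w: "PF S (\<lambda>_. 0) (\<lambda>Q. \<i> * rho S Q * \<theta>1 Q) (pchain (\<alpha> j)) = PF S (\<lambda>_. 0) (\<lambda>Q. \<i> * rho S Q * \<theta>2 Q) (pchain (\<alpha> j))"
        by auto
      show "PF S \<theta> (\<lambda>_. 0) (pchain (\<alpha> j)) = 0"
        unfolding \<theta>_def z0 PF_diff2 using b by simp
      show "PF S (\<lambda>_. 0) (\<lambda>Q. \<i> * rho S Q * \<theta> Q) (pchain (\<alpha> j)) = 0"
        unfolding k z0 PF_diff2 using w by simp
    qed
  qed
  then show ?thesis unfolding e1 e2 \<theta>_def by (intro omF_cong) auto
qed

lemma holo_exists:
  assumes SB: "symplectic_basis S g \<alpha> \<beta>"
  shows "\<exists>\<omega>. holo_diff S \<omega> \<and> (\<forall>j<g. bper S \<omega> (\<alpha> j) = a j \<and> wper S \<omega> (\<alpha> j) = b j)"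
proof -
  obtain \<theta> where L: "\<forall>v\<in>verts S. LV S \<theta> (\<lambda>Q. \<i> * rho S Q * \<theta> Q) v = 0"
    and P: "\<forall>j<g. PF S \<theta> (\<lambda>_. 0) (pchain (\<alpha> j)) = a j / 2 \<and> PF S (\<lambda>_. 0) (\<lambda>Q. \<i> * rho S Q * \<theta> Q) (pchain (\<alpha> j)) = b j / 2"
    using existence[OF SB, of "\<lambda>j. a j / 2" "\<lambda>j. b j / 2"] by blast
  show ?thesis
    using omF_holo[OF L] by (intro exI[of _ "omF S \<theta> (\<lambda>Q. \<i> * rho S Q * \<theta> Q)"]) (simp add: bper_omF wper_omF P[rule_format])
qed

lemma omegaB_props:
  assumes SB: "symplectic_basis S g \<alpha> \<beta>"
  shows "holo_diff S (omegaB S g \<alpha> k) \<and> (\<forall>j<g. bper S (omegaB S g \<alpha> k) (\<alpha> j) = (if j = k then 1 else 0) \<and> wper S (omegaB S g \<alpha> k) (\<alpha> j) = 0)"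
proof -
  have ex: "\<exists>!\<omega>. holo_diff S \<omega> \<and> (\<forall>j<g. bper S \<omega> (\<alpha> j) = (if j = k then 1 else 0) \<and> wper S \<omega> (\<alpha> j) = 0)"
  proof (rule ex_ex1I)
    show "\<exists>\<omega>. holo_diff S \<omega> \<and> (\<forall>j<g. bper S \<omega> (\<alpha> j) = (if j = k then 1 else 0) \<and> wper S \<omega> (\<alpha> j) = 0)"
      using holo_exists[OF SB, of "\<lambda>j. if j = k then 1 else 0" "\<lambda>_. 0"] by simp
    show "\<omega>1 = \<omega>2" if "holo_diff S \<omega>1 \<and> (\<forall>j<g. bper S \<omega>1 (\<alpha> j) = (if j = k then 1 else 0) \<and> wper S \<omega>1 (\<alpha> j) = 0)"
      "holo_diff S \<omega>2 \<and> (\<forall>j<g. bper S \<omega>2 (\<alpha> j) = (if j = k then 1 else 0) \<and> wper S \<omega>2 (\<alpha> j) = 0)" for \<omega>1 \<omega>2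
      using holo_unique[OF SB] that by auto
  qed
  show ?thesis unfolding omegaB_def by (rule theI'[OF ex])
qed

lemma omegaB_eq:
  assumes SB: "symplectic_basis S g \<alpha> \<beta>" and H: "holo_diff S \<omega>"
    and P: "\<forall>j<g. bper S \<omega> (\<alpha> j) = (if j = k then 1 else 0) \<and> wper S \<omega> (\<alpha> j) = 0"
  shows "omegaB S g \<alpha> k = \<omega>"
  using holo_unique[OF SB _ H] omegaB_props[OF SB, of k] P by auto

lemma omegaW_props:
  assumes SB: "symplectic_basis S g \<alpha> \<beta>"
  shows "holo_diff S (omegaW S g \<alpha> k) \<and> (\<forall>j<g. wper S (omegaW S g \<alpha> k) (\<alpha> j) = (if j = k then 1 else 0) \<and> bper S (omegaW S g \<alpha> k) (\<alpha> j) = 0)"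
proof -
  have ex: "\<exists>!\<omega>. holo_diff S \<omega> \<and> (\<forall>j<g. wper S \<omega> (\<alpha> j) = (if j = k then 1 else 0) \<and> bper S \<omega> (\<alpha> j) = 0)"
  proof (rule ex_ex1I)
    show "\<exists>\<omega>. holo_diff S \<omega> \<and> (\<forall>j<g. wper S \<omega> (\<alpha> j) = (if j = k then 1 else 0) \<and> bper S \<omega> (\<alpha> j) = 0)"
      using holo_exists[OF SB, of "\<lambda>_. 0" "\<lambda>j. if j = k then 1 else 0"] by blast
    show "\<omega>1 = \<omega>2" if "holo_diff S \<omega>1 \<and> (\<forall>j<g. wper S \<omega>1 (\<alpha> j) = (if j = k then 1 else 0) \<and> bper S \<omega>1 (\<alpha> j) = 0)"
      "holo_diff S \<omega>2 \<and> (\<forall>j<g. wper S \<omega>2 (\<alpha> j) = (if j = k then 1 else 0) \<and> bper S \<omega>2 (\<alpha> j) = 0)" for \<omega>1 \<omega>2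
      using holo_unique[OF SB] that by auto
  qed
  show ?thesis unfolding omegaW_def by (rule theI'[OF ex])
qed

lemma omegaW_eq:
  assumes SB: "symplectic_basis S g \<alpha> \<beta>" and H: "holo_diff S \<omega>"
    and P: "\<forall>j<g. wper S \<omega> (\<alpha> j) = (if j = k then 1 else 0) \<and> bper S \<omega> (\<alpha> j) = 0"
  shows "omegaW S g \<alpha> k = \<omega>"
  using holo_unique[OF SB _ H] omegaW_props[OF SB, of k] P by auto

lemma per_hom:
  assumes H: "holo_diff S \<omega>" and h: "homologous S (pchain xs) c"
  defines "\<theta> \<equiv> \<lambda>Q. \<omega> (xe (T1 (quad S Q)))"
  shows "bper S \<omega> xs = 2 * PF S \<theta> (\<lambda>_. 0) c" "wper S \<omega> xs = 2 * PF S (\<lambda>_. 0) (\<lambda>Q. \<i> * rho S Q * \<theta> Q) c"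
proof -
  have e: "\<omega> = omF S \<theta> (\<lambda>Q. \<i> * rho S Q * \<theta> Q)" unfolding \<theta>_def by (rule holo_omF(1)[OF H])
  have l: "\<forall>v\<in>verts S. LV S \<theta> (\<lambda>Q. \<i> * rho S Q * \<theta> Q) v = 0" unfolding \<theta>_def by (rule holo_omF(2)[OF H])
  note lp = LV_parts[OF l]
  show "bper S \<omega> xs = 2 * PF S \<theta> (\<lambda>_. 0) c"
    by (subst e) (simp add: bper_omF Pair_hom[OF h lp(1)])
  show "wper S \<omega> xs = 2 * PF S (\<lambda>_. 0) (\<lambda>Q. \<i> * rho S Q * \<theta> Q) c"
    by (subst e) (simp add: wper_omF Pair_hom[OF h lp(2)])
qed

lemma per_hom_self:
  assumes H: "holo_diff S \<omega>" and h: "homologous S (pchain xs) (pchain ys)"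
  shows "bper S \<omega> xs = bper S \<omega> ys" "wper S \<omega> xs = wper S \<omega> ys"
proof -
  have e: "\<omega> = omF S (\<lambda>Q. \<omega> (xe (T1 (quad S Q)))) (\<lambda>Q. \<i> * rho S Q * \<omega> (xe (T1 (quad S Q))))"
    by (rule holo_omF(1)[OF H])
  show "bper S \<omega> xs = bper S \<omega> ys" using per_hom(1)[OF H h] e by (metis bper_omF)
  show "wper S \<omega> xs = wper S \<omega> ys" using per_hom(2)[OF H h] e by (metis wper_omF)
qed

lemma per_hom_beta:
  assumes H: "holo_diff S \<omega>"
    and h: "homologous S (pchain ys) (\<lambda>e. (\<Sum>j<g. h j i * pchain (\<alpha> j) e) - pchain (\<beta> i) e)"
  shows "bper S \<omega> ys = (\<Sum>j<g. of_int (h j i) * bper S \<omega> (\<alpha> j)) - bper S \<omega> (\<beta> i)"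
    "wper S \<omega> ys = (\<Sum>j<g. of_int (h j i) * wper S \<omega> (\<alpha> j)) - wper S \<omega> (\<beta> i)"
proof -
  define \<theta> where "\<theta> = (\<lambda>Q. \<omega> (xe (T1 (quad S Q))))"
  have e: "\<omega> = omF S \<theta> (\<lambda>Q. \<i> * rho S Q * \<theta> Q)"
    unfolding \<theta>_def by (rule holo_omF(1)[OF H])
  have lin: "PF S a b (\<lambda>e. (\<Sum>j<g. h j i * pchain (\<alpha> j) e) - pchain (\<beta> i) e) =
     (\<Sum>j<g. of_int (h j i) * PF S a b (pchain (\<alpha> j))) - PF S a b (pchain (\<beta> i))" for a b
    by (simp add: Pair_diff Pair_sum Pair_smult)
  have b\<alpha>: "bper S \<omega> x = 2 * PF S \<theta> (\<lambda>_. 0) (pchain x)" for x unfolding e by (rule bper_omF)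
  have w\<alpha>: "wper S \<omega> x = 2 * PF S (\<lambda>_. 0) (\<lambda>Q. \<i> * rho S Q * \<theta> Q) (pchain x)" for x unfolding e by (rule wper_omF)
  have pb: "bper S \<omega> ys = 2 * PF S \<theta> (\<lambda>_. 0) (\<lambda>e. (\<Sum>j<g. h j i * pchain (\<alpha> j) e) - pchain (\<beta> i) e)"
    using per_hom(1)[OF H h] unfolding \<theta>_def .
  have pw: "wper S \<omega> ys = 2 * PF S (\<lambda>_. 0) (\<lambda>Q. \<i> * rho S Q * \<theta> Q) (\<lambda>e. (\<Sum>j<g. h j i * pchain (\<alpha> j) e) - pchain (\<beta> i) e)"
    using per_hom(2)[OF H h] unfolding \<theta>_def .
  show "bper S \<omega> ys = (\<Sum>j<g. of_int (h j i) * bper S \<omega> (\<alpha> j)) - bper S \<omega> (\<beta> i)"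
    by (simp only: pb lin) (simp add: b\<alpha> sum_distrib_left algebra_simps)
  show "wper S \<omega> ys = (\<Sum>j<g. of_int (h j i) * wper S \<omega> (\<alpha> j)) - wper S \<omega> (\<beta> i)"
    by (simp only: pw lin) (simp add: w\<alpha> sum_distrib_left algebra_simps)
qed

end


lemma re_fix: "X = cnj (complex_of_int a - X) \<Longrightarrow> 2 * Re X = of_int a"
proof -
  assume h: "X = cnj (complex_of_int a - X)"
  have "Re X = Re (cnj (complex_of_int a - X))" using h by simp
  then show ?thesis by simp
qed

lemma sum_delta_h: "k < (g::nat) \<Longrightarrow> (\<Sum>l<g. of_int (h l j) * (if l = k then 1 else 0)) = (complex_of_int (h k j))"
proof -
  assume k: "k < g"
  have "(\<Sum>l<g. of_int (h l j) * (if l = k then 1 else 0)) = (\<Sum>l<g. if l = k then complex_of_int (h k j) else 0)"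
    by (rule sum.cong) auto
  also have "\<dots> = complex_of_int (h k j)"
    using sum.delta[of "{..<g}" k "\<lambda>_. complex_of_int (h k j)"] k by simp
  finally show ?thesis .
qed

lemma re_fix0: "X = cnj (0 - X) \<Longrightarrow> Re X = 0"
proof -
  assume h: "X = cnj (0 - X)"
  have "Re X = Re (cnj (0 - X))" using h by simp
  then show ?thesis by simp
qed

context DRT begin

lemma per_alpha:
  assumes SB: "symplectic_basis S g \<alpha> \<beta>" and H: "holo_diff S \<omega>"
    and Ha: "\<forall>i<g. homologous S (pchain (tau_path \<tau> (\<alpha> i))) (pchain (\<alpha> i))" and l: "l < g"
  shows "bper S \<omega> (tau_path \<tau> (\<alpha> l)) = bper S \<omega> (\<alpha> l)" "wper S \<omega> (tau_path \<tau> (\<alpha> l)) = wper S \<omega> (\<alpha> l)"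
  using per_hom_self[OF H] Ha l by auto

lemma main1:
  assumes SB: "symplectic_basis S g \<alpha> \<beta>" and T: "is_type1 S \<tau>"
    and hs: "\<forall>i<g. \<forall>j<g. h i j \<in> {0, 1} \<and> h i j = h j i"
    and Ha: "\<forall>i<g. homologous S (pchain (tau_path \<tau> (\<alpha> i))) (pchain (\<alpha> i))"
    and Hb: "\<forall>i<g. homologous S (pchain (tau_path \<tau> (\<beta> i)))
                 (\<lambda>e. (\<Sum>j<g. h j i * pchain (\<alpha> j) e) - pchain (\<beta> i) e)"
    and j: "j < g" and k: "k < g"
  shows "2 * Re (PiBB S g \<alpha> \<beta> j k) = of_int (h j k) \<and>
            2 * Re (PiWW S g \<alpha> \<beta> j k) = of_int (h j k) \<and>
            Re (PiWB S g \<alpha> \<beta> j k) = 0 \<and> Re (PiBW S g \<alpha> \<beta> j k) = 0"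
proof -
  have cl: "closed_Xpath S (\<alpha> l)" "closed_Xpath S (\<beta> l)" if "l < g" for l
    using SB that by (auto simp: symplectic_basis_def)
  have hjk: "h k j = h j k" using hs j k by auto
  have TT: "is_type1 S \<tau> \<or> is_type2 S \<tau>" using T by simp
  define \<omega> where "\<omega> = omegaB S g \<alpha> k"
  have pB: "holo_diff S \<omega>" "\<forall>l<g. bper S \<omega> (\<alpha> l) = (if l = k then 1 else 0) \<and> wper S \<omega> (\<alpha> l) = 0"
    using omegaB_props[OF SB, of k] unfolding \<omega>_def by auto
  have "omegaB S g \<alpha> k = etaf S \<tau> \<omega>"
  proof (rule omegaB_eq[OF SB eta_holo[OF TT pB(1)]])
    show "\<forall>l<g. bper S (etaf S \<tau> \<omega>) (\<alpha> l) = (if l = k then 1 else 0) \<and> wper S (etaf S \<tau> \<omega>) (\<alpha> l) = 0"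
      using bper_eta1[OF T cl(1)] wper_eta1[OF T cl(1)] per_alpha[OF SB pB(1) Ha] pB(2) by simp
  qed
  then have eqB: "\<omega> = etaf S \<tau> \<omega>" unfolding \<omega>_def .
  have bb: "bper S \<omega> (tau_path \<tau> (\<beta> j)) = of_int (h k j) - bper S \<omega> (\<beta> j)"
    using per_hom_beta(1)[where h=h and i=j and \<alpha>=\<alpha> and \<beta>=\<beta>, OF pB(1) Hb[rule_format, OF j]] pB(2) sum_delta_h[OF k] by simp
  have wb: "wper S \<omega> (tau_path \<tau> (\<beta> j)) = - wper S \<omega> (\<beta> j)"
    using per_hom_beta(2)[where h=h and i=j and \<alpha>=\<alpha> and \<beta>=\<beta>, OF pB(1) Hb[rule_format, OF j]] pB(2) by simp
  have 1: "bper S \<omega> (\<beta> j) = cnj (of_int (h k j) - bper S \<omega> (\<beta> j))"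
    using bper_eta1[OF T cl(2)[OF j], of \<omega>] eqB bb by simp
  have 2: "wper S \<omega> (\<beta> j) = cnj (0 - wper S \<omega> (\<beta> j))"
    using wper_eta1[OF T cl(2)[OF j], of \<omega>] eqB wb by simp
  define \<omega>' where "\<omega>' = omegaW S g \<alpha> k"
  have pW: "holo_diff S \<omega>'" "\<forall>l<g. wper S \<omega>' (\<alpha> l) = (if l = k then 1 else 0) \<and> bper S \<omega>' (\<alpha> l) = 0"
    using omegaW_props[OF SB, of k] unfolding \<omega>'_def by auto
  have "omegaW S g \<alpha> k = etaf S \<tau> \<omega>'"
  proof (rule omegaW_eq[OF SB eta_holo[OF TT pW(1)]])
    show "\<forall>l<g. wper S (etaf S \<tau> \<omega>') (\<alpha> l) = (if l = k then 1 else 0) \<and> bper S (etaf S \<tau> \<omega>') (\<alpha> l) = 0"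
      using bper_eta1[OF T cl(1)] wper_eta1[OF T cl(1)] per_alpha[OF SB pW(1) Ha] pW(2) by simp
  qed
  then have eqW: "\<omega>' = etaf S \<tau> \<omega>'" unfolding \<omega>'_def .
  have bb': "bper S \<omega>' (tau_path \<tau> (\<beta> j)) = - bper S \<omega>' (\<beta> j)"
    using per_hom_beta(1)[where h=h and i=j and \<alpha>=\<alpha> and \<beta>=\<beta>, OF pW(1) Hb[rule_format, OF j]] pW(2) by simp
  have wb': "wper S \<omega>' (tau_path \<tau> (\<beta> j)) = of_int (h k j) - wper S \<omega>' (\<beta> j)"
    using per_hom_beta(2)[where h=h and i=j and \<alpha>=\<alpha> and \<beta>=\<beta>, OF pW(1) Hb[rule_format, OF j]] pW(2) sum_delta_h[OF k] by simp
  have 3: "wper S \<omega>' (\<beta> j) = cnj (of_int (h k j) - wper S \<omega>' (\<beta> j))"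
    using wper_eta1[OF T cl(2)[OF j], of \<omega>'] eqW wb' by simp
  have 4: "bper S \<omega>' (\<beta> j) = cnj (0 - bper S \<omega>' (\<beta> j))"
    using bper_eta1[OF T cl(2)[OF j], of \<omega>'] eqW bb' by simp
  show ?thesis
    unfolding PiBB_def PiWW_def PiWB_def PiBW_def \<omega>_def[symmetric] \<omega>'_def[symmetric] hjk[symmetric]
    using re_fix[OF 1] re_fix[OF 3] re_fix0[OF 2] re_fix0[OF 4] by simp
qed

lemma main2:
  assumes SB: "symplectic_basis S g \<alpha> \<beta>" and T: "is_type2 S \<tau>"
    and hs: "\<forall>i<g. \<forall>j<g. h i j \<in> {0, 1} \<and> h i j = h j i"
    and Ha: "\<forall>i<g. homologous S (pchain (tau_path \<tau> (\<alpha> i))) (pchain (\<alpha> i))"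
    and Hb: "\<forall>i<g. homologous S (pchain (tau_path \<tau> (\<beta> i)))
                 (\<lambda>e. (\<Sum>j<g. h j i * pchain (\<alpha> j) e) - pchain (\<beta> i) e)"
    and j: "j < g" and k: "k < g"
  shows "PiBB S g \<alpha> \<beta> j k + cnj (PiWW S g \<alpha> \<beta> j k) = of_int (h j k) \<and>
            PiWB S g \<alpha> \<beta> j k + cnj (PiBW S g \<alpha> \<beta> j k) = 0"
proof -
  have cl: "closed_Xpath S (\<alpha> l)" "closed_Xpath S (\<beta> l)" if "l < g" for l
    using SB that by (auto simp: symplectic_basis_def)
  have hjk: "h k j = h j k" using hs j k by auto
  have TT: "is_type1 S \<tau> \<or> is_type2 S \<tau>" using T by simp
  define \<omega> where "\<omega> = omegaB S g \<alpha> k"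
  have pB: "holo_diff S \<omega>" "\<forall>l<g. bper S \<omega> (\<alpha> l) = (if l = k then 1 else 0) \<and> wper S \<omega> (\<alpha> l) = 0"
    using omegaB_props[OF SB, of k] unfolding \<omega>_def by auto
  have eqW: "omegaW S g \<alpha> k = etaf S \<tau> \<omega>"
  proof (rule omegaW_eq[OF SB eta_holo[OF TT pB(1)]])
    show "\<forall>l<g. wper S (etaf S \<tau> \<omega>) (\<alpha> l) = (if l = k then 1 else 0) \<and> bper S (etaf S \<tau> \<omega>) (\<alpha> l) = 0"
      using bper_eta2[OF T cl(1)] wper_eta2[OF T cl(1)] per_alpha[OF SB pB(1) Ha] pB(2) by simp
  qed
  have bb: "bper S \<omega> (tau_path \<tau> (\<beta> j)) = of_int (h k j) - bper S \<omega> (\<beta> j)"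
    using per_hom_beta(1)[where h=h and i=j and \<alpha>=\<alpha> and \<beta>=\<beta>, OF pB(1) Hb[rule_format, OF j]] pB(2) sum_delta_h[OF k] by simp
  have wb: "wper S \<omega> (tau_path \<tau> (\<beta> j)) = - wper S \<omega> (\<beta> j)"
    using per_hom_beta(2)[where h=h and i=j and \<alpha>=\<alpha> and \<beta>=\<beta>, OF pB(1) Hb[rule_format, OF j]] pB(2) by simp
  have 1: "wper S (omegaW S g \<alpha> k) (\<beta> j) = cnj (of_int (h k j) - bper S \<omega> (\<beta> j))"
    unfolding eqW using wper_eta2[OF T cl(2)[OF j], of \<omega>] bb by simp
  have 2: "bper S (omegaW S g \<alpha> k) (\<beta> j) = cnj (- wper S \<omega> (\<beta> j))"
    unfolding eqW using bper_eta2[OF T cl(2)[OF j], of \<omega>] wb by simp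
  show ?thesis
    unfolding PiBB_def PiWW_def PiWB_def PiBW_def \<omega>_def[symmetric] hjk[symmetric] 1 2 by simp
qed

end

theorem mainTheorem6:
  fixes S :: "('v, 'f) drs" and \<tau> :: "'v \<Rightarrow> 'v" and g :: nat
    and \<alpha> \<beta> :: "nat \<Rightarrow> 'v set list" and h :: "nat \<Rightarrow> nat \<Rightarrow> int"
  assumes "discrete_riemann_surface S g"
    and "discrete_antihol_involution S \<tau>"
    and "symplectic_basis S g \<alpha> \<beta>"
    and "\<forall>i<g. \<forall>j<g. h i j \<in> {0, 1} \<and> h i j = h j i"
    and "\<forall>i<g. homologous S (pchain (tau_path \<tau> (\<alpha> i))) (pchain (\<alpha> i))"
    and "\<forall>i<g. homologous S (pchain (tau_path \<tau> (\<beta> i)))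
                 (\<lambda>e. (\<Sum>j<g. h j i * pchain (\<alpha> j) e) - pchain (\<beta> i) e)"
  shows "(is_type1 S \<tau> \<longrightarrow> (\<forall>j<g. \<forall>k<g.
            2 * Re (PiBB S g \<alpha> \<beta> j k) = of_int (h j k) \<and>
            2 * Re (PiWW S g \<alpha> \<beta> j k) = of_int (h j k) \<and>
            Re (PiWB S g \<alpha> \<beta> j k) = 0 \<and> Re (PiBW S g \<alpha> \<beta> j k) = 0)) \<and>
         (is_type2 S \<tau> \<longrightarrow> (\<forall>j<g. \<forall>k<g.
            PiBB S g \<alpha> \<beta> j k + cnj (PiWW S g \<alpha> \<beta> j k) = of_int (h j k) \<and>
            PiWB S g \<alpha> \<beta> j k + cnj (PiBW S g \<alpha> \<beta> j k) = 0))"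
proof -
  interpret DRT S g \<tau>
    using assms(1,2) by (unfold_locales) (auto simp: discrete_antihol_involution_def)
  show ?thesis
    using main1[OF assms(3) _ assms(4,5,6)] main2[OF assms(3) _ assms(4,5,6)] by blast
qed


end
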